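(* Let $(G,t)$ be a non-trivial problem instance, $X$ a modulator of $G$, $C$ a connected component of $G-X$, $T$ the block-cut tree of $C$, and let $\langle a_1,B_1,a_2,B_2,a_3,B_3,a_4\rangle$ be a simple path in $T$ (with $a_i$ articulation vertices and $B_i$ blocks) such that $N_G\big((V(B_1)\cup V(B_2)\cup V(B_3))\setminus\{a_1,a_4\}\big)=\{a_1,a_4\}$. Let $G'$ be obtained from $G$ by contracting $B_1$ into $a_1$ (replacing $V(B_1)$ by the single vertex $a_1$ adjacent to all of $N_G(V(B_1))$). Then $(G,t)$ has a solution if and only if $(G',t)$ has a solution.
   Context: $\mathrm{tw}$ is treewidth. A solution for $(G,t)$ is $S\subseteq V(G)$ with $|S|\le t$ and $\mathrm{tw}(G-S)\le 2$. A modulator of $G$ is $X$ with $\mathrm{tw}(G-X)\le 2$. $(G,t)$ is trivial if $|V(G)|\le 4$, or $\mathrm{tw}(G)\le 2$, or $t=0$, or some connected subgraph $H$ satisfies $\mathrm{tw}\big(G[N_G[H]]\cup\binom{N_G(H)}{2}\big)\le 2$ ($N_G(H)$: vertices outside $H$ adjacent to $H$; $N_G[H]=V(H)\cup N_G(H)$; $\cup\binom{N_G(H)}{2}$ adds all edges among $N_G(H)$); otherwise non-trivial. For $U\subseteq V(G)$, $N_G(U)$ is the set of vertices outside $U$ adjacent to $U$. A block of a connected graph is a maximal biconnected subgraph (biconnected = connected without articulation vertex); the block-cut tree of a connected graph $C$ is the bipartite tree whose nodes are the articulation vertices of $C$ and the blocks of $C$, with articulation vertex $a$ adjacent to block $B$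 iff $a\in V(B)$. *)

theory Defs
  imports Main
begin

type_synonym 'a graph = "'a set \<times> 'a set set"

definition verts :: "'a graph \<Rightarrow> 'a set" where "verts G = fst G"
definition edges :: "'a graph \<Rightarrow> 'a set set" where "edges G = snd G"

definition wf_graph :: "'a graph \<Rightarrow> bool" where
  "wf_graph G \<longleftrightarrow> finite (verts G) \<and>
     (\<forall>e\<in>edges G. \<exists>u v. u \<noteq> v \<and> e = {u, v} \<and> u \<in> verts G \<and> v \<in> verts G)"

definition subgraph :: "'a graph \<Rightarrow> 'a graph \<Rightarrow> bool" where
  "subgraph H G \<longleftrightarrow> wf_graph H \<and> verts H \<subseteq> verts G \<and> edges H \<subseteq> edges G"

definition induced :: "'a graph \<Rightarrow> 'a set \<Rightarrow> 'a graph" where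
  "induced G U = (verts G \<inter> U, {e \<in> edges G. e \<subseteq> U})"

definition del_verts :: "'a graph \<Rightarrow> 'a set \<Rightarrow> 'a graph" where
  "del_verts G S = induced G (verts G - S)"

definition reach :: "'a graph \<Rightarrow> 'a \<Rightarrow> 'a \<Rightarrow> bool" where
  "reach G u v \<longleftrightarrow> u \<in> verts G \<and> v \<in> verts G \<and>
     (u, v) \<in> {(x, y). {x, y} \<in> edges G}\<^sup>*"

definition connected_graph :: "'a graph \<Rightarrow> bool" where
  "connected_graph G \<longleftrightarrow> verts G \<noteq> {} \<and> (\<forall>u\<in>verts G. \<forall>v\<in>verts G. reach G u v)"

definition components :: "'a graph \<Rightarrow> 'a set set" where
  "components G = {{v. reach G u v} | u. u \<in> verts G}"

definition nbhd :: "'a graph \<Rightarrow> 'a set \<Rightarrow> 'a set" where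
  "nbhd G U = {v \<in> verts G. v \<notin> U \<and> (\<exists>u\<in>U. {u, v} \<in> edges G)}"

definition articulation :: "'a graph \<Rightarrow> 'a \<Rightarrow> bool" where
  "articulation G v \<longleftrightarrow> v \<in> verts G \<and>
     card (components (del_verts G {v})) > card (components G)"

definition biconnected :: "'a graph \<Rightarrow> bool" where
  "biconnected G \<longleftrightarrow> connected_graph G \<and> (\<forall>v. \<not> articulation G v)"

definition is_block :: "'a graph \<Rightarrow> 'a graph \<Rightarrow> bool" where
  "is_block C B \<longleftrightarrow> subgraph B C \<and> biconnected B \<and>
     (\<forall>B'. subgraph B B' \<and> subgraph B' C \<and> biconnected B' \<longrightarrow> B' = B)"

text \<open>Adjacency in the block-cut tree of C (articulation vertex a, block B).\<close>
definition bc_adj :: "'a graph \<Rightarrow> 'a \<Rightarrow> 'a graph \<Rightarrow> bool" where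
  "bc_adj C a B \<longleftrightarrow> articulation C a \<and> is_block C B \<and> a \<in> verts B"

definition is_tree :: "nat graph \<Rightarrow> bool" where
  "is_tree T \<longleftrightarrow> wf_graph T \<and> connected_graph T \<and> card (edges T) + 1 = card (verts T)"

definition tree_decomp :: "'a graph \<Rightarrow> nat graph \<Rightarrow> (nat \<Rightarrow> 'a set) \<Rightarrow> bool" where
  "tree_decomp G T bag \<longleftrightarrow> is_tree T \<and>
     (\<forall>i\<in>verts T. bag i \<subseteq> verts G) \<and>
     (\<forall>v\<in>verts G. \<exists>i\<in>verts T. v \<in> bag i) \<and>
     (\<forall>e\<in>edges G. \<exists>i\<in>verts T. e \<subseteq> bag i) \<and>
     (\<forall>v\<in>verts G. connected_graph (induced T {i \<in> verts T. v \<in> bag i}))"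

definition has_tw_le :: "'a graph \<Rightarrow> nat \<Rightarrow> bool" where
  "has_tw_le G k \<longleftrightarrow> (\<exists>T bag. tree_decomp G T bag \<and> (\<forall>i\<in>verts T. card (bag i) \<le> k + 1))"

definition tw :: "'a graph \<Rightarrow> nat" where
  "tw G = (LEAST k. has_tw_le G k)"

definition is_solution :: "'a graph \<Rightarrow> nat \<Rightarrow> 'a set \<Rightarrow> bool" where
  "is_solution G t S \<longleftrightarrow> S \<subseteq> verts G \<and> card S \<le> t \<and> tw (del_verts G S) \<le> 2"

definition modulator :: "'a graph \<Rightarrow> 'a set \<Rightarrow> bool" where
  "modulator G X \<longleftrightarrow> tw (del_verts G X) \<le> 2"

definition torso_nbhd :: "'a graph \<Rightarrow> 'a set \<Rightarrow> 'a graph" where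
  "torso_nbhd G U = (let N = nbhd G U in
     (verts (induced G (U \<union> N)),
      edges (induced G (U \<union> N)) \<union> {{u, v} | u v. u \<in> N \<and> v \<in> N \<and> u \<noteq> v}))"

definition trivial_instance :: "'a graph \<Rightarrow> nat \<Rightarrow> bool" where
  "trivial_instance G t \<longleftrightarrow> card (verts G) \<le> 4 \<or> tw G \<le> 2 \<or> t = 0 \<or>
     (\<exists>H. subgraph H G \<and> connected_graph H \<and> tw (torso_nbhd G (verts H)) \<le> 2)"

definition contract_into :: "'a graph \<Rightarrow> 'a set \<Rightarrow> 'a \<Rightarrow> 'a graph" where
  "contract_into G W a =
     ((verts G - W) \<union> {a},
      {e \<in> edges G. e \<inter> W = {}} \<union> {{a, w} | w. w \<in> nbhd G W})"

end

theory Submission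
  imports Defs
begin


definition rel :: "'a graph \<Rightarrow> ('a \<times> 'a) set" where
  "rel G = {(x, y). {x, y} \<in> edges G}"

lemma reach_alt: "reach G u v \<longleftrightarrow> u \<in> verts G \<and> v \<in> verts G \<and> (u, v) \<in> (rel G)\<^sup>*"
  by (simp add: reach_def rel_def)

lemma rel_sym: "(rel G)\<inverse> = rel G"
  by (auto simp: rel_def insert_commute)

lemma reach_refl: "v \<in> verts G \<Longrightarrow> reach G v v"
  by (simp add: reach_alt)

lemma reach_edge: "{u, v} \<in> edges G \<Longrightarrow> u \<in> verts G \<Longrightarrow> v \<in> verts G \<Longrightarrow> reach G u v"
  by (auto simp: reach_alt rel_def)

lemma reach_trans: "reach G u v \<Longrightarrow> reach G v w \<Longrightarrow> reach G u w"
  by (auto simp: reach_alt)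

lemma reach_sym: "reach G u v \<Longrightarrow> reach G v u"
proof -
  assume "reach G u v"
  then have "(v, u) \<in> ((rel G)\<inverse>)\<^sup>*" "u \<in> verts G" "v \<in> verts G"
    by (auto simp: reach_alt rtrancl_converse)
  then show ?thesis by (simp add: rel_sym reach_alt)
qed

lemma reach_verts: "reach G u v \<Longrightarrow> u \<in> verts G \<and> v \<in> verts G"
  by (simp add: reach_alt)

lemma rtrancl_hom:
  assumes "\<And>x y. {x, y} \<in> edges A \<Longrightarrow> {f x, f y} \<in> edges B"
    and "(u, v) \<in> (rel A)\<^sup>*"
  shows "(f u, f v) \<in> (rel B)\<^sup>*"
  using assms(2)
proof (induction rule: rtrancl_induct)
  case base then show ?case by simp
next
  case (step y z)
  then have "(f y, f z) \<in> rel B" using assms(1) by (auto simp: rel_def)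
  with step show ?case by (meson rtrancl.rtrancl_into_rtrancl)
qed

lemma reach_hom:
  assumes "\<And>x y. {x, y} \<in> edges A \<Longrightarrow> {f x, f y} \<in> edges B"
    and "reach A u v" and "f u \<in> verts B" and "f v \<in> verts B"
  shows "reach B (f u) (f v)"
  using rtrancl_hom[of A f B u v] assms by (auto simp: reach_alt)

lemma reach_mono:
  assumes "edges A \<subseteq> edges B" "verts A \<subseteq> verts B" "reach A u v"
  shows "reach B u v"
proof -
  have "reach B (id u) (id v)"
    using assms(3) reach_verts[OF assms(3)] assms(1,2) by (intro reach_hom[of A id B u v]) auto
  then show ?thesis by simp
qed

lemma verts_induced[simp]: "verts (induced G U) = verts G \<inter> U"
  by (simp add: induced_def verts_def)
lemma edges_induced[simp]: "edges (induced G U) = {e \<in> edges G. e \<subseteq> U}"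
  by (simp add: induced_def edges_def)
lemma verts_pair[simp]: "verts (V, E) = V" by (simp add: verts_def)
lemma edges_pair[simp]: "edges (V, E) = E" by (simp add: edges_def)

lemma verts_del[simp]: "verts (del_verts G S) = verts G - S"
  by (auto simp: del_verts_def)
lemma edges_del[simp]: "edges (del_verts G S) = {e \<in> edges G. e \<subseteq> verts G - S}"
  by (auto simp: del_verts_def)

lemma wfD: "wf_graph G \<Longrightarrow> e \<in> edges G \<Longrightarrow> \<exists>u v. u \<noteq> v \<and> e = {u, v} \<and> u \<in> verts G \<and> v \<in> verts G"
  by (auto simp: wf_graph_def)

lemma wf_edge: "wf_graph G \<Longrightarrow> {x, y} \<in> edges G \<Longrightarrow> x \<noteq> y \<and> x \<in> verts G \<and> y \<in> verts G"
proof -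
  assume "wf_graph G" "{x, y} \<in> edges G"
  then obtain u v where "u \<noteq> v" "{x, y} = {u, v}" "u \<in> verts G" "v \<in> verts G"
    by (auto simp: wf_graph_def)
  then show ?thesis by (auto simp: doubleton_eq_iff)
qed

lemma wf_edge_sub: "wf_graph G \<Longrightarrow> e \<in> edges G \<Longrightarrow> e \<subseteq> verts G"
  by (auto simp: wf_graph_def)

lemma wf_finite: "wf_graph G \<Longrightarrow> finite (verts G)"
  by (simp add: wf_graph_def)

lemma wf_induced: "wf_graph G \<Longrightarrow> wf_graph (induced G U)"
proof -
  assume wf: "wf_graph G"
  show ?thesis unfolding wf_graph_def
  proof (intro conjI ballI)
    show "finite (verts (induced G U))" using wf_finite[OF wf] by simp
  next
    fix e assume "e \<in> edges (induced G U)"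
    then have "e \<in> edges G" "e \<subseteq> U" by auto
    then obtain u v where "u \<noteq> v" "e = {u, v}" "u \<in> verts G" "v \<in> verts G" using wfD[OF wf] by blast
    then show "\<exists>u v. u \<noteq> v \<and> e = {u, v} \<and> u \<in> verts (induced G U) \<and> v \<in> verts (induced G U)"
      using \<open>e \<subseteq> U\<close> by auto
  qed
qed

lemma wf_del: "wf_graph G \<Longrightarrow> wf_graph (del_verts G S)"
  unfolding del_verts_def by (rule wf_induced)

lemma wf_finite_edges: "wf_graph G \<Longrightarrow> finite (edges G)"
proof -
  assume "wf_graph G"
  then have "edges G \<subseteq> Pow (verts G)" "finite (verts G)" using wf_edge_sub wf_finite by blast+
  then show ?thesis by (meson finite_Pow_iff finite_subset)
qed

lemma connected_root:
  assumes "r \<in> verts G" "\<And>z. z \<in> verts G \<Longrightarrow> reach G z r"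
  shows "connected_graph G"
  unfolding connected_graph_def
proof (intro conjI ballI)
  show "verts G \<noteq> {}" using assms(1) by blast
  fix u v assume "u \<in> verts G" "v \<in> verts G"
  then show "reach G u v" using assms(2)[of u] assms(2)[of v] reach_sym reach_trans by metis
qed

lemma connectedD: "connected_graph G \<Longrightarrow> u \<in> verts G \<Longrightarrow> v \<in> verts G \<Longrightarrow> reach G u v"
  by (simp add: connected_graph_def)

lemma reach_induced_set:
  assumes wf: "wf_graph H" and sub: "edges H \<subseteq> edges H'" "verts H \<subseteq> verts H'"
    and r: "reach H u v"
  shows "reach (induced H' {w. reach H u w}) u v"
proof -
  have u: "u \<in> verts H" using reach_verts[OF r] by simp
  have "(u, v) \<in> (rel H)\<^sup>*" using r by (simp add: reach_alt)
  then have "reach H u v \<and> (u, v) \<in> (rel (induced H' {w. reach H u w}))\<^sup>*"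
  proof (induction rule: rtrancl_induct)
    case base then show ?case using reach_refl[OF u] by simp
  next
    case (step y z)
    then have e: "{y, z} \<in> edges H" by (simp add: rel_def)
    then have "z \<in> verts H" "y \<in> verts H" using wf_edge[OF wf] by blast+
    then have rz: "reach H u z" using step reach_trans reach_edge e by metis
    have "{y, z} \<in> edges (induced H' {w. reach H u w})"
      using e sub rz step by auto
    then have "(y, z) \<in> rel (induced H' {w. reach H u w})" by (simp add: rel_def)
    with step rz show ?case by (meson rtrancl.rtrancl_into_rtrancl)
  qed
  moreover have "v \<in> verts H'" "u \<in> verts H'" using reach_verts[OF r] sub by auto
  ultimately show ?thesis using r u by (auto simp: reach_alt)
qed

lemma reach_last:
  assumes wf: "wf_graph R" and r: "reach R u z" and ne: "u \<noteq> z"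
  shows "\<exists>w. reach (del_verts R {z}) u w \<and> {w, z} \<in> edges R"
proof -
  have u: "u \<in> verts R" using reach_verts[OF r] by simp
  define Q where "Q = (\<lambda>y. reach (del_verts R {z}) u y \<or> (\<exists>w. reach (del_verts R {z}) u w \<and> {w, z} \<in> edges R))"
  have "(u, z) \<in> (rel R)\<^sup>*" using r by (simp add: reach_alt)
  then have "Q z"
  proof (induction rule: rtrancl_induct)
    case base
    have "u \<in> verts (del_verts R {z})" using u ne by simp
    then have "reach (del_verts R {z}) u u" by (rule reach_refl)
    then show ?case unfolding Q_def by blast
  next
    case (step y y')
    then have e: "{y, y'} \<in> edges R" by (simp add: rel_def)
    show ?case
    proof (cases "reach (del_verts R {z}) u y")
      case True
      show ?thesis
      proof (cases "y' = z")
        case True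
        have "{y, z} \<in> edges R" using e True by simp
        then show ?thesis unfolding Q_def using \<open>reach (del_verts R {z}) u y\<close> by blast
      next
        case False
        have "y \<in> verts (del_verts R {z})" using reach_verts[OF True] by (rule conjunct2)
        then have "y \<in> verts R - {z}" by simp
        moreover have "y' \<in> verts R" using wf_edge[OF wf e] by blast
        ultimately have "reach (del_verts R {z}) y y'" using False e
          by (intro reach_edge) auto
        then have "reach (del_verts R {z}) u y'" using True by (rule reach_trans[rotated])
        then show ?thesis unfolding Q_def by blast
      qed
    next
      case False then show ?thesis using step.IH unfolding Q_def by blast
    qed
  qed
  moreover have "\<not> reach (del_verts R {z}) u z"
  proof
    assume "reach (del_verts R {z}) u z"
    then have "z \<in> verts (del_verts R {z})" by (rule reach_verts[THEN conjunct2])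
    then show False by simp
  qed
  ultimately show ?thesis unfolding Q_def by blast
qed

lemma first_step:
  assumes wf: "wf_graph B" and r: "reach B u w" and ne: "u \<noteq> w"
  shows "\<exists>y. {u, y} \<in> edges B \<and> y \<noteq> u \<and> y \<in> verts B"
proof -
  have "(u, w) \<in> (rel B)\<^sup>*" using r by (simp add: reach_alt)
  then obtain y where "(u, y) \<in> rel B"
  proof (cases rule: converse_rtranclE)
    case base then show ?thesis using ne by simp
  next
    case (step y) then show ?thesis using that by blast
  qed
  then have "{u, y} \<in> edges B" by (simp add: rel_def)
  then show ?thesis using wf_edge[OF wf, of u y] by blast
qed



lemma td_unfold:
  assumes "tree_decomp G T bag"
  shows "is_tree T" "\<And>i. i \<in> verts T \<Longrightarrow> bag i \<subseteq> verts G"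
    "\<And>v. v \<in> verts G \<Longrightarrow> \<exists>i\<in>verts T. v \<in> bag i"
    "\<And>e. e \<in> edges G \<Longrightarrow> \<exists>i\<in>verts T. e \<subseteq> bag i"
    "\<And>v. v \<in> verts G \<Longrightarrow> connected_graph (induced T {i \<in> verts T. v \<in> bag i})"
  using assms unfolding tree_decomp_def by blast+

lemma td_reach:
  assumes "tree_decomp G T bag" "v \<in> verts G" "i \<in> verts T" "j \<in> verts T" "v \<in> bag i" "v \<in> bag j"
  shows "reach (induced T {i \<in> verts T. v \<in> bag i}) i j"
proof -
  have "connected_graph (induced T {i \<in> verts T. v \<in> bag i})" using td_unfold(5)[OF assms(1,2)] .
  then show ?thesis using assms(3-6) by (intro connectedD) auto
qed

lemma has_tw_mono: "has_tw_le G k \<Longrightarrow> k \<le> k' \<Longrightarrow> has_tw_le G k'"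
  unfolding has_tw_le_def by fastforce

lemma has_tw_exists:
  assumes wf: "wf_graph G"
  shows "has_tw_le G (card (verts G))"
proof -
  let ?T = "({0::nat}, {}::nat set set)"
  have tree: "is_tree ?T"
    unfolding is_tree_def
  proof (intro conjI)
    show "wf_graph ?T" unfolding wf_graph_def by simp
    show "connected_graph ?T" by (rule connected_root[of 0]) (auto intro: reach_refl)
    show "card (edges ?T) + 1 = card (verts ?T)" by simp
  qed
  have "tree_decomp G ?T (\<lambda>_. verts G)"
    unfolding tree_decomp_def
  proof (intro conjI ballI)
    show "is_tree ?T" by (rule tree)
  next
    fix e assume "e \<in> edges G"
    then show "\<exists>i\<in>verts ?T. e \<subseteq> verts G" using wf_edge_sub[OF wf] by simp
  next
    fix v assume "v \<in> verts G"
    then have "{i \<in> verts ?T. v \<in> verts G} = {0}" by simp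
    moreover have "connected_graph (induced ?T {0})"
      by (rule connected_root[of 0]) (auto intro: reach_refl)
    ultimately show "connected_graph (induced ?T {i \<in> verts ?T. v \<in> verts G})" by simp
  qed auto
  then show ?thesis unfolding has_tw_le_def by fastforce
qed

lemma tw_le2:
  assumes wf: "wf_graph G"
  shows "tw G \<le> 2 \<longleftrightarrow> has_tw_le G 2"
proof
  assume "tw G \<le> 2"
  have "has_tw_le G (tw G)" unfolding tw_def using has_tw_exists[OF wf] by (rule LeastI)
  then show "has_tw_le G 2" using \<open>tw G \<le> 2\<close> by (rule has_tw_mono)
next
  assume "has_tw_le G 2"
  then show "tw G \<le> 2" unfolding tw_def by (rule Least_le)
qed

lemma tw_sub:
  assumes fin: "finite (verts G)" and wfH: "wf_graph H" and sv: "verts H \<subseteq> verts G"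
    and se: "edges H \<subseteq> edges G" and tw: "has_tw_le G k"
  shows "has_tw_le H k"
proof -
  obtain T bag where td: "tree_decomp G T bag" and cb: "\<forall>i\<in>verts T. card (bag i) \<le> k + 1"
    using tw unfolding has_tw_le_def by blast
  define bag' where "bag' i = bag i \<inter> verts H" for i
  have "tree_decomp H T bag'"
    unfolding tree_decomp_def
  proof (intro conjI ballI)
    show "is_tree T" using td_unfold(1)[OF td] .
  next
    fix i show "bag' i \<subseteq> verts H" by (auto simp: bag'_def)
  next
    fix v assume v: "v \<in> verts H"
    then obtain i where "i \<in> verts T" "v \<in> bag i" using td_unfold(3)[OF td] sv by blast
    then show "\<exists>i\<in>verts T. v \<in> bag' i" using v by (auto simp: bag'_def)
  next
    fix e assume e: "e \<in> edges H"
    then obtain i where "i \<in> verts T" "e \<subseteq> bag i" using td_unfold(4)[OF td] se by blast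
    moreover have "e \<subseteq> verts H" using wf_edge_sub[OF wfH e] .
    ultimately show "\<exists>i\<in>verts T. e \<subseteq> bag' i" by (auto simp: bag'_def)
  next
    fix v assume v: "v \<in> verts H"
    have "{i \<in> verts T. v \<in> bag' i} = {i \<in> verts T. v \<in> bag i}" using v by (auto simp: bag'_def)
    then show "connected_graph (induced T {i \<in> verts T. v \<in> bag' i})"
      using td_unfold(5)[OF td] v sv by auto
  qed
  moreover have "\<forall>i\<in>verts T. card (bag' i) \<le> k + 1"
  proof
    fix i assume i: "i \<in> verts T"
    have "finite (bag i)" using td_unfold(2)[OF td i] fin finite_subset by blast
    then have "card (bag' i) \<le> card (bag i)" unfolding bag'_def by (intro card_mono) auto
    then show "card (bag' i) \<le> k + 1" using cb i by fastforce
  qed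
  ultimately show ?thesis unfolding has_tw_le_def by blast
qed

lemma verts_contract[simp]: "verts (contract_into G W z) = (verts G - W) \<union> {z}"
  by (simp add: contract_into_def)
lemma edges_contract[simp]:
  "edges (contract_into G W z) = {e \<in> edges G. e \<inter> W = {}} \<union> {{z, w} | w. w \<in> nbhd G W}"
  by (simp add: contract_into_def)

lemma tw_contract:
  assumes fin: "finite (verts G)" and W: "W \<subseteq> verts G" and con: "connected_graph (induced G W)"
    and z: "z \<notin> verts G - W" and tw: "has_tw_le G k"
  shows "has_tw_le (contract_into G W z) k"
proof -
  obtain T bag where td: "tree_decomp G T bag" and cb: "\<forall>i\<in>verts T. card (bag i) \<le> k + 1"
    using tw unfolding has_tw_le_def by blast
  define bag' where "bag' i = (if bag i \<inter> W = {} then bag i else (bag i - W) \<union> {z})" for i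
  define M where "M = {i \<in> verts T. bag i \<inter> W \<noteq> {}}"
  obtain w0 where w0: "w0 \<in> W" using con unfolding connected_graph_def by auto
  obtain i0 where i0: "i0 \<in> verts T" "w0 \<in> bag i0" using td_unfold(3)[OF td] W w0 by blast
  have Sw: "reach (induced T M) i j" if "w \<in> W" "i \<in> verts T" "j \<in> verts T" "w \<in> bag i" "w \<in> bag j" for w i j
  proof -
    have r: "reach (induced T {i \<in> verts T. w \<in> bag i}) i j" using td_reach[OF td _ that(2-5)] that(1) W by blast
    show ?thesis by (rule reach_mono[OF _ _ r]) (use that(1) in \<open>auto simp: M_def\<close>)
  qed
  have key: "\<forall>i\<in>verts T. y \<in> bag i \<longrightarrow> reach (induced T M) i0 i" if "(w0, y) \<in> (rel (induced G W))\<^sup>*" for y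
    using that
  proof (induction rule: rtrancl_induct)
    case base
    then show ?case using Sw[OF w0 i0(1)] i0(2) by blast
  next
    case (step x y)
    then have e: "{x, y} \<in> edges G" "{x, y} \<subseteq> W" by (auto simp: rel_def)
    obtain j where j: "j \<in> verts T" "{x, y} \<subseteq> bag j" using td_unfold(4)[OF td e(1)] by blast
    have "reach (induced T M) i0 j" using step.IH j by auto
    show ?case
    proof (intro ballI impI)
      fix i assume "i \<in> verts T" "y \<in> bag i"
      then have "reach (induced T M) j i" using Sw[of y j i] j e(2) by blast
      with \<open>reach (induced T M) i0 j\<close> show "reach (induced T M) i0 i" by (rule reach_trans)
    qed
  qed
  have "tree_decomp (contract_into G W z) T bag'"
    unfolding tree_decomp_def
  proof (intro conjI ballI)
    show "is_tree T" using td_unfold(1)[OF td] .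
  next
    fix i assume "i \<in> verts T"
    then show "bag' i \<subseteq> verts (contract_into G W z)" using td_unfold(2)[OF td] by (auto simp: bag'_def)
  next
    fix v assume v: "v \<in> verts (contract_into G W z)"
    show "\<exists>i\<in>verts T. v \<in> bag' i"
    proof (cases "v = z")
      case True then show ?thesis using i0 w0 by (auto simp: bag'_def)
    next
      case False
      then have "v \<in> verts G - W" using v by simp
      then obtain i where "i \<in> verts T" "v \<in> bag i" using td_unfold(3)[OF td] by blast
      then show ?thesis using \<open>v \<in> verts G - W\<close> by (auto simp: bag'_def)
    qed
  next
    fix e assume "e \<in> edges (contract_into G W z)"
    then consider "e \<in> edges G" "e \<inter> W = {}" | w where "e = {z, w}" "w \<in> nbhd G W" by auto
    then show "\<exists>i\<in>verts T. e \<subseteq> bag' i"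
    proof cases
      case 1
      then obtain i where "i \<in> verts T" "e \<subseteq> bag i" using td_unfold(4)[OF td] by blast
      then show ?thesis using 1 by (auto simp: bag'_def)
    next
      case 2
      then obtain u where u: "u \<in> W" "{u, w} \<in> edges G" "w \<notin> W" by (auto simp: nbhd_def)
      then obtain i where "i \<in> verts T" "{u, w} \<subseteq> bag i" using td_unfold(4)[OF td] by blast
      then show ?thesis using 2 u by (auto simp: bag'_def)
    qed
  next
    fix v assume v: "v \<in> verts (contract_into G W z)"
    show "connected_graph (induced T {i \<in> verts T. v \<in> bag' i})"
    proof (cases "v = z")
      case False
      then have "v \<in> verts G - W" using v by simp
      then have "{i \<in> verts T. v \<in> bag' i} = {i \<in> verts T. v \<in> bag i}" using False by (auto simp: bag'_def)
      then show ?thesis using td_unfold(5)[OF td] \<open>v \<in> verts G - W\<close> by auto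
    next
      case True
      have eqM: "{i \<in> verts T. v \<in> bag' i} = M"
      proof (rule set_eqI, rule iffI)
        fix i assume "i \<in> {i \<in> verts T. v \<in> bag' i}"
        then have "i \<in> verts T" "z \<in> bag' i" using True by auto
        moreover have "z \<notin> bag i \<or> bag i \<inter> W \<noteq> {}" using td_unfold(2)[OF td \<open>i \<in> verts T\<close>] z by blast
        ultimately show "i \<in> M" by (auto simp: M_def bag'_def split: if_splits)
      qed (auto simp: M_def bag'_def True)
      have "connected_graph (induced T M)"
      proof (rule connected_root[of i0])
        show "i0 \<in> verts (induced T M)" using i0 w0 by (auto simp: M_def)
      next
        fix i assume "i \<in> verts (induced T M)"
        then obtain w where "i \<in> verts T" "w \<in> bag i" "w \<in> W" by (auto simp: M_def)
        moreover have "reach (induced G W) w0 w" using connectedD[OF con] w0 \<open>w \<in> W\<close> W by auto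
        moreover have "(w0, w) \<in> (rel (induced G W))\<^sup>*" using \<open>reach (induced G W) w0 w\<close> by (simp add: reach_alt)
        ultimately have "reach (induced T M) i0 i" using key by blast
        then show "reach (induced T M) i i0" by (rule reach_sym)
      qed
      then show ?thesis using eqM by simp
    qed
  qed
  moreover have "\<forall>i\<in>verts T. card (bag' i) \<le> k + 1"
  proof
    fix i assume i: "i \<in> verts T"
    have fb: "finite (bag i)" using td_unfold(2)[OF td i] fin finite_subset by blast
    have "card (bag' i) \<le> card (bag i)"
    proof (cases "bag i \<inter> W = {}")
      case True then show ?thesis by (simp add: bag'_def)
    next
      case False
      then have "bag i - W \<subset> bag i" by blast
      then have "card (bag i - W) < card (bag i)" using fb by (rule psubset_card_mono[rotated])
      then show ?thesis using fb False by (simp add: bag'_def card_insert_if)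
    qed
    then show "card (bag' i) \<le> k + 1" using cb i by fastforce
  qed
  ultimately show ?thesis unfolding has_tw_le_def by blast
qed



lemma tree_nonempty: "is_tree T \<Longrightarrow> verts T \<noteq> {}"
  by (simp add: is_tree_def connected_graph_def)

lemma par_ne: "2 * (x::nat) \<noteq> 2 * y + 1" by presburger

lemma tw_glue:
  assumes tw1: "has_tw_le G1 k" and tw2: "has_tw_le G2 k" and sh: "verts G1 \<inter> verts G2 \<subseteq> {c}"
  shows "has_tw_le (verts G1 \<union> verts G2, edges G1 \<union> edges G2) k"
proof -
  obtain T1 b1 where td1: "tree_decomp G1 T1 b1" and cb1: "\<forall>i\<in>verts T1. card (b1 i) \<le> k + 1"
    using tw1 unfolding has_tw_le_def by blast
  obtain T2 b2 where td2: "tree_decomp G2 T2 b2" and cb2: "\<forall>i\<in>verts T2. card (b2 i) \<le> k + 1"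
    using tw2 unfolding has_tw_le_def by blast
  note t1 = td_unfold[OF td1] and t2 = td_unfold[OF td2]
  have wfT1: "wf_graph T1" and wfT2: "wf_graph T2" using t1(1) t2(1) by (auto simp: is_tree_def)
  define f1 :: "nat \<Rightarrow> nat" where "f1 i = 2 * i" for i
  define f2 :: "nat \<Rightarrow> nat" where "f2 j = 2 * j + 1" for j
  have f12: "f1 x \<noteq> f2 y" for x y unfolding f1_def f2_def by (rule par_ne)
  have inj1: "inj f1" and inj2: "inj f2" unfolding f1_def f2_def inj_def by auto
  have "\<exists>i. i \<in> verts T1 \<and> (c \<in> verts G1 \<longrightarrow> c \<in> b1 i)"
    using t1(3)[of c] tree_nonempty[OF t1(1)] by blast
  then obtain i1 where i1: "i1 \<in> verts T1" "c \<in> verts G1 \<Longrightarrow> c \<in> b1 i1" by blast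
  have "\<exists>j. j \<in> verts T2 \<and> (c \<in> verts G2 \<longrightarrow> c \<in> b2 j)"
    using t2(3)[of c] tree_nonempty[OF t2(1)] by blast
  then obtain j2 where j2: "j2 \<in> verts T2" "c \<in> verts G2 \<Longrightarrow> c \<in> b2 j2" by blast
  define VT where "VT = f1 ` verts T1 \<union> f2 ` verts T2"
  define E1 where "E1 = (\<lambda>e. f1 ` e) ` edges T1"
  define E2 where "E2 = (\<lambda>e. f2 ` e) ` edges T2"
  define ET where "ET = E1 \<union> E2 \<union> {{f1 i1, f2 j2}}"
  define T where "T = (VT, ET)"
  define bag where "bag n = (if even n then b1 (n div 2) else b2 (n div 2))" for n
  have bag1[simp]: "bag (f1 i) = b1 i" for i by (simp add: bag_def f1_def)
  have bag2[simp]: "bag (f2 j) = b2 j" for j by (simp add: bag_def f2_def)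
  have vT[simp]: "verts T = VT" and eT[simp]: "edges T = ET" by (simp_all add: T_def)
  have hom1: "{f1 x, f1 y} \<in> ET" if "{x, y} \<in> edges T1" for x y
  proof -
    have "f1 ` {x, y} \<in> E1" using that unfolding E1_def by blast
    then show ?thesis unfolding ET_def by simp
  qed
  have hom2: "{f2 x, f2 y} \<in> ET" if "{x, y} \<in> edges T2" for x y
  proof -
    have "f2 ` {x, y} \<in> E2" using that unfolding E2_def by blast
    then show ?thesis unfolding ET_def by simp
  qed
  have finV1: "finite (verts T1)" and finV2: "finite (verts T2)" using wfT1 wfT2 wf_finite by blast+
  have finE1: "finite (edges T1)" and finE2: "finite (edges T2)" using wfT1 wfT2 wf_finite_edges by blast+
  have wfT: "wf_graph T"
    unfolding wf_graph_def
  proof (intro conjI ballI)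
    show "finite (verts T)" using finV1 finV2 by (simp add: VT_def)
  next
    fix e assume "e \<in> edges T"
    then consider "e \<in> E1" | "e \<in> E2" | "e = {f1 i1, f2 j2}" by (auto simp: ET_def)
    then show "\<exists>u v. u \<noteq> v \<and> e = {u, v} \<and> u \<in> verts T \<and> v \<in> verts T"
    proof cases
      case 1
      then obtain e' where "e' \<in> edges T1" "e = f1 ` e'" by (auto simp: E1_def)
      moreover obtain u v where "u \<noteq> v" "e' = {u, v}" "u \<in> verts T1" "v \<in> verts T1"
        using wfD[OF wfT1 \<open>e' \<in> edges T1\<close>] by blast
      ultimately show ?thesis using inj1 by (intro exI[of _ "f1 u"] exI[of _ "f1 v"]) (auto simp: VT_def inj_def)
    next
      case 2
      then obtain e' where "e' \<in> edges T2" "e = f2 ` e'" by (auto simp: E2_def)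
      moreover obtain u v where "u \<noteq> v" "e' = {u, v}" "u \<in> verts T2" "v \<in> verts T2"
        using wfD[OF wfT2 \<open>e' \<in> edges T2\<close>] by blast
      ultimately show ?thesis using inj2 by (intro exI[of _ "f2 u"] exI[of _ "f2 v"]) (auto simp: VT_def inj_def)
    next
      case 3 then show ?thesis using f12 i1 j2 by (auto simp: VT_def)
    qed
  qed
  have conT: "connected_graph T"
  proof (rule connected_root[of "f1 i1"])
    show "f1 i1 \<in> verts T" using i1 by (simp add: VT_def)
  next
    fix n assume "n \<in> verts T"
    then consider i where "i \<in> verts T1" "n = f1 i" | j where "j \<in> verts T2" "n = f2 j" by (auto simp: VT_def)
    then show "reach T n (f1 i1)"
    proof cases
      case 1
      have "connected_graph T1" using t1(1) by (simp add: is_tree_def)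
      then have "reach T1 i i1" using 1 i1 by (intro connectedD)
      then have "reach T (f1 i) (f1 i1)" using 1 i1 by (intro reach_hom[of T1 f1 T]) (auto simp: VT_def hom1)
      then show ?thesis using 1 by simp
    next
      case 2
      have "connected_graph T2" using t2(1) by (simp add: is_tree_def)
      then have "reach T2 j j2" using 2 j2 by (intro connectedD)
      then have "reach T (f2 j) (f2 j2)" using 2 j2 by (intro reach_hom[of T2 f2 T]) (auto simp: VT_def hom2)
      moreover have "reach T (f2 j2) (f1 i1)" using i1 j2
        by (intro reach_edge) (auto simp: VT_def ET_def insert_commute)
      ultimately show ?thesis using 2 reach_trans by metis
    qed
  qed
  have cardV: "card VT = card (verts T1) + card (verts T2)"
  proof -
    have "card VT = card (f1 ` verts T1) + card (f2 ` verts T2)"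
      unfolding VT_def using finV1 finV2 f12 by (intro card_Un_disjoint) auto
    also have "\<dots> = card (verts T1) + card (verts T2)"
      using inj1 inj2 by (simp add: card_image inj_on_subset)
    finally show ?thesis .
  qed
  have ne1: "e \<noteq> {}" if "e \<in> edges T1" for e using wfD[OF wfT1 that] by blast
  have ne2: "e \<noteq> {}" if "e \<in> edges T2" for e using wfD[OF wfT2 that] by blast
  have cardE: "card ET = card (edges T1) + card (edges T2) + 1"
  proof -
    have d12: "E1 \<inter> E2 = {}"
    proof (rule ccontr)
      assume "E1 \<inter> E2 \<noteq> {}"
      then obtain e1 e2 where "e1 \<in> edges T1" "e2 \<in> edges T2" "f1 ` e1 = f2 ` e2" by (auto simp: E1_def E2_def)
      moreover obtain x where "x \<in> e1" using ne1 \<open>e1 \<in> edges T1\<close> by blast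
      ultimately have "f1 x \<in> f2 ` e2" by blast
      then obtain y where "f1 x = f2 y" by blast
      then show False using f12[of x y] by simp
    qed
    have db: "{f1 i1, f2 j2} \<notin> E1 \<union> E2"
    proof
      assume "{f1 i1, f2 j2} \<in> E1 \<union> E2"
      then show False
      proof
        assume "{f1 i1, f2 j2} \<in> E1"
        then obtain e where "{f1 i1, f2 j2} = f1 ` e" by (auto simp: E1_def)
        then have "f2 j2 \<in> f1 ` e" by (metis insertI1 insert_commute)
        then obtain x where "f2 j2 = f1 x" by blast
        then show False using f12[of x j2] by simp
      next
        assume "{f1 i1, f2 j2} \<in> E2"
        then obtain e where "{f1 i1, f2 j2} = f2 ` e" by (auto simp: E2_def)
        then have "f1 i1 \<in> f2 ` e" by (metis insertI1)
        then obtain x where "f1 i1 = f2 x" by blast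
        then show False using f12[of i1 x] by simp
      qed
    qed
    have c1: "card E1 = card (edges T1)" unfolding E1_def
      by (rule card_image) (meson inj1 inj_image_eq_iff inj_onI)
    have c2: "card E2 = card (edges T2)" unfolding E2_def
      by (rule card_image) (meson inj2 inj_image_eq_iff inj_onI)
    have fE: "finite E1" "finite E2" using finE1 finE2 by (simp_all add: E1_def E2_def)
    have "card ET = card (E1 \<union> E2) + 1" unfolding ET_def using db fE by simp
    also have "card (E1 \<union> E2) = card E1 + card E2" using d12 fE by (rule card_Un_disjoint[rotated 2]) 
    finally show ?thesis using c1 c2 by simp
  qed
  have treeT: "is_tree T"
    unfolding is_tree_def using wfT conT cardV cardE t1(1) t2(1) by (simp add: is_tree_def)
  let ?G = "(verts G1 \<union> verts G2, edges G1 \<union> edges G2)"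
  have "tree_decomp ?G T bag"
    unfolding tree_decomp_def
  proof (intro conjI ballI)
    show "is_tree T" by (rule treeT)
  next
    fix n assume "n \<in> verts T"
    then show "bag n \<subseteq> verts ?G" using t1(2) t2(2) by (fastforce simp: VT_def)
  next
    fix v assume "v \<in> verts ?G"
    then consider "v \<in> verts G1" | "v \<in> verts G2" by auto
    then show "\<exists>n\<in>verts T. v \<in> bag n"
    proof cases
      case 1 then obtain i where "i \<in> verts T1" "v \<in> b1 i" using t1(3) by blast
      then show ?thesis by (intro bexI[of _ "f1 i"]) (auto simp: VT_def)
    next
      case 2 then obtain i where "i \<in> verts T2" "v \<in> b2 i" using t2(3) by blast
      then show ?thesis by (intro bexI[of _ "f2 i"]) (auto simp: VT_def)
    qed
  next
    fix e assume "e \<in> edges ?G"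
    then consider "e \<in> edges G1" | "e \<in> edges G2" by auto
    then show "\<exists>n\<in>verts T. e \<subseteq> bag n"
    proof cases
      case 1 then obtain i where "i \<in> verts T1" "e \<subseteq> b1 i" using t1(4) by blast
      then show ?thesis by (intro bexI[of _ "f1 i"]) (auto simp: VT_def)
    next
      case 2 then obtain i where "i \<in> verts T2" "e \<subseteq> b2 i" using t2(4) by blast
      then show ?thesis by (intro bexI[of _ "f2 i"]) (auto simp: VT_def)
    qed
  next
    fix v assume v: "v \<in> verts ?G"
    define S1 where "S1 = {i \<in> verts T1. v \<in> b1 i}"
    define S2 where "S2 = {i \<in> verts T2. v \<in> b2 i}"
    define M where "M = {n \<in> verts T. v \<in> bag n}"
    have M: "M = f1 ` S1 \<union> f2 ` S2" by (auto simp: M_def S1_def S2_def VT_def)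
    have r1: "reach (induced T M) (f1 i) (f1 i')" if "reach (induced T1 S1) i i'" for i i'
    proof (rule reach_hom[OF _ that])
      fix x y assume "{x, y} \<in> edges (induced T1 S1)"
      then show "{f1 x, f1 y} \<in> edges (induced T M)" using hom1 by (auto simp: M)
    next
      show "f1 i \<in> verts (induced T M)" "f1 i' \<in> verts (induced T M)"
        using reach_verts[OF that] by (auto simp: M VT_def)
    qed
    have r2: "reach (induced T M) (f2 i) (f2 i')" if "reach (induced T2 S2) i i'" for i i'
    proof (rule reach_hom[OF _ that])
      fix x y assume "{x, y} \<in> edges (induced T2 S2)"
      then show "{f2 x, f2 y} \<in> edges (induced T M)" using hom2 by (auto simp: M)
    next
      show "f2 i \<in> verts (induced T M)" "f2 i' \<in> verts (induced T M)"
        using reach_verts[OF that] by (auto simp: M VT_def)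
    qed
    have c1: "reach (induced T1 S1) i i'" if "i \<in> S1" "i' \<in> S1" for i i'
      using td_reach[OF td1, of v i i'] that t1(2) by (auto simp: S1_def S1_def)
    have c2: "reach (induced T2 S2) i i'" if "i \<in> S2" "i' \<in> S2" for i i'
      using td_reach[OF td2, of v i i'] that t2(2) by (auto simp: S2_def)
    have S1e: "S1 = {}" if "v \<notin> verts G1" using that t1(2) by (auto simp: S1_def)
    have S2e: "S2 = {}" if "v \<notin> verts G2" using that t2(2) by (auto simp: S2_def)
    have S1n: "S1 \<noteq> {}" if "v \<in> verts G1" using that t1(3) by (auto simp: S1_def)
    have S2n: "S2 \<noteq> {}" if "v \<in> verts G2" using that t2(3) by (auto simp: S2_def)
    have "connected_graph (induced T M)"
    proof (cases "v \<in> verts G1 \<and> v \<in> verts G2")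
      case True
      then have "v = c" using sh by blast
      then have i1S: "i1 \<in> S1" and j2S: "j2 \<in> S2" using i1 j2 True by (auto simp: S1_def S2_def)
      show ?thesis
      proof (rule connected_root[of "f1 i1"])
        show "f1 i1 \<in> verts (induced T M)" using i1S by (auto simp: M S1_def VT_def)
      next
        fix n assume "n \<in> verts (induced T M)"
        then consider i where "i \<in> S1" "n = f1 i" | j where "j \<in> S2" "n = f2 j" by (auto simp: M)
        then show "reach (induced T M) n (f1 i1)"
        proof cases
          case 1 then show ?thesis using r1 c1 i1S by blast
        next
          case 2
          have "reach (induced T M) (f2 j) (f2 j2)" using r2 c2 2 j2S by blast
          moreover have "reach (induced T M) (f2 j2) (f1 i1)" using i1S j2S
            by (intro reach_edge) (auto simp: M S1_def S2_def VT_def ET_def insert_commute)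
          ultimately show ?thesis using 2 reach_trans by metis
        qed
      qed
    next
      case False
      then consider "v \<in> verts G1" "v \<notin> verts G2" | "v \<in> verts G2" "v \<notin> verts G1" using v by auto
      then show ?thesis
      proof cases
        case 1
        then obtain s where s: "s \<in> S1" using S1n by blast
        have MM: "M = f1 ` S1" using M S2e 1 by simp
        show ?thesis
        proof (rule connected_root[of "f1 s"])
          show "f1 s \<in> verts (induced T M)" using s by (auto simp: MM S1_def VT_def)
        next
          fix n assume "n \<in> verts (induced T M)"
          then obtain i where "i \<in> S1" "n = f1 i" by (auto simp: MM)
          then show "reach (induced T M) n (f1 s)" using r1 c1 s by blast
        qed
      next
        case 2
        then obtain s where s: "s \<in> S2" using S2n by blast
        have MM: "M = f2 ` S2" using M S1e 2 by simp
        show ?thesis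
        proof (rule connected_root[of "f2 s"])
          show "f2 s \<in> verts (induced T M)" using s by (auto simp: MM S2_def VT_def)
        next
          fix n assume "n \<in> verts (induced T M)"
          then obtain i where "i \<in> S2" "n = f2 i" by (auto simp: MM)
          then show "reach (induced T M) n (f2 s)" using r2 c2 s by blast
        qed
      qed
    qed
    then show "connected_graph (induced T {n \<in> verts T. v \<in> bag n})" by (simp add: M_def)
  qed
  moreover have "\<forall>n\<in>verts T. card (bag n) \<le> k + 1" using cb1 cb2 by (auto simp: VT_def)
  ultimately show ?thesis unfolding has_tw_le_def by blast
qed



lemma comps_connected:
  assumes "connected_graph G" shows "components G = {verts G}"
proof -
  have "{v. reach G u v} = verts G" if "u \<in> verts G" for u
  proof
    show "{v. reach G u v} \<subseteq> verts G" using reach_verts by fastforce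
    show "verts G \<subseteq> {v. reach G u v}" using connectedD[OF assms that] by blast
  qed
  moreover have "verts G \<noteq> {}" using assms by (simp add: connected_graph_def)
  ultimately show ?thesis unfolding components_def by auto
qed

lemma comps_sub: "components G \<subseteq> Pow (verts G)"
  unfolding components_def using reach_verts by fastforce

lemma comps_le1:
  assumes fin: "finite (verts G)" and ne: "verts G \<noteq> {}" and c: "card (components G) \<le> 1"
  shows "connected_graph G"
proof -
  have fc: "finite (components G)" using comps_sub[of G] fin by (rule finite_subset[OF _ finite_Pow_iff[THEN iffD2]])
  have all: "\<forall>x\<in>components G. \<forall>y\<in>components G. x = y"
    using card_le_Suc0_iff_eq[OF fc] c by simp
  show ?thesis unfolding connected_graph_def
  proof (intro conjI ballI)
    show "verts G \<noteq> {}" by (rule ne)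
    fix u w assume u: "u \<in> verts G" and w: "w \<in> verts G"
    have m1: "{v. reach G u v} \<in> components G" using u unfolding components_def by blast
    have m2: "{v. reach G w v} \<in> components G" using w unfolding components_def by blast
    have eq: "{v. reach G u v} = {v. reach G w v}" using all m1 m2 by simp
    have "reach G w w" using w by (rule reach_refl)
    then have "w \<in> {v. reach G w v}" by simp
    then have "w \<in> {v. reach G u v}" by (simp only: eq)
    then show "reach G u w" by simp
  qed
qed

lemma bc_del_connected:
  assumes bc: "biconnected G" and fin: "finite (verts G)" and v: "v \<in> verts G" and ne: "verts G - {v} \<noteq> {}"
  shows "connected_graph (del_verts G {v})"
proof -
  have con: "connected_graph G" using bc by (simp add: biconnected_def)
  have "\<not> articulation G v" using bc by (simp add: biconnected_def)
  then have "card (components (del_verts G {v})) \<le> card (components G)" using v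
    by (simp add: articulation_def)
  also have "\<dots> = 1" using comps_connected[OF con] by simp
  finally show ?thesis using fin ne by (intro comps_le1) auto
qed

lemma bc_intro:
  assumes fin: "finite (verts G)" and con: "connected_graph G"
    and d: "\<And>v. v \<in> verts G \<Longrightarrow> verts G - {v} \<noteq> {} \<Longrightarrow> connected_graph (del_verts G {v})"
  shows "biconnected G"
  unfolding biconnected_def
proof (intro conjI allI)
  show "connected_graph G" by (rule con)
  fix v show "\<not> articulation G v"
  proof
    assume a: "articulation G v"
    then have v: "v \<in> verts G" by (simp add: articulation_def)
    have c1: "card (components G) = 1" using comps_connected[OF con] by simp
    show False
    proof (cases "verts G - {v} = {}")
      case True
      then have "verts (del_verts G {v}) = {}" by simp
      then have "components (del_verts G {v}) = {}" unfolding components_def by blast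
      then show False using a c1 by (simp add: articulation_def)
    next
      case False
      then have "card (components (del_verts G {v})) = 1" using comps_connected[OF d[OF v False]] by simp
      then show False using a c1 by (simp add: articulation_def)
    qed
  qed
qed

lemma bc_reach:
  assumes wf: "wf_graph B" and bc: "biconnected B" and z: "z \<in> verts B - {v}" and w: "w \<in> verts B - {v}"
  shows "reach (del_verts B {v}) z w"
proof (cases "v \<in> verts B")
  case True
  have "verts B - {v} \<noteq> {}" using z by blast
  then have "connected_graph (del_verts B {v})" using bc_del_connected[OF bc wf_finite[OF wf] True] by blast
  then show ?thesis using z w by (intro connectedD) auto
next
  case False
  have "connected_graph B" using bc by (simp add: biconnected_def)
  then have "reach B z w" using z w by (intro connectedD) auto
  moreover have "edges B \<subseteq> edges (del_verts B {v})" using False wf_edge_sub[OF wf] by auto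
  moreover have "verts B \<subseteq> verts (del_verts B {v})" using False by auto
  ultimately show ?thesis by (rule reach_mono[of B, rotated 2])
qed

lemma del_mono:
  "verts A \<subseteq> verts H \<Longrightarrow> edges A \<subseteq> edges H \<Longrightarrow> reach (del_verts A S) x y \<Longrightarrow> reach (del_verts H S) x y"
  by (rule reach_mono[of "del_verts A S"]) auto

lemma ear:
  assumes bcA: "biconnected A" and wfA: "wf_graph A" and wfQ: "wf_graph Q"
    and xy: "x \<noteq> y" "x \<in> verts A" "y \<in> verts A"
    and cond: "\<And>v z. z \<in> verts Q - {v} \<Longrightarrow> \<exists>a\<in>verts A - {v}. reach (del_verts Q {v}) z a"
  shows "biconnected (verts A \<union> verts Q, edges A \<union> edges Q)"
proof -
  let ?H = "(verts A \<union> verts Q, edges A \<union> edges Q)"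
  have fin: "finite (verts ?H)" using wf_finite[OF wfA] wf_finite[OF wfQ] by simp
  have sA: "verts A \<subseteq> verts ?H" "edges A \<subseteq> edges ?H" and sQ: "verts Q \<subseteq> verts ?H" "edges Q \<subseteq> edges ?H" by auto
  have dcon: "connected_graph (del_verts ?H {v})" if v: "v \<in> verts ?H" for v
  proof -
    obtain a0 where a0: "a0 \<in> verts A - {v}" using xy by blast
    show ?thesis
    proof (rule connected_root[of a0])
      show "a0 \<in> verts (del_verts ?H {v})" using a0 by auto
    next
      fix z assume "z \<in> verts (del_verts ?H {v})"
      then have z: "z \<in> verts ?H - {v}" by simp
      show "reach (del_verts ?H {v}) z a0"
      proof (cases "z \<in> verts A")
        case True
        then have "z \<in> verts A - {v}" using z by blast
        from bc_reach[OF wfA bcA this a0] show ?thesis by (rule del_mono[OF sA])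
      next
        case False
        then have "z \<in> verts Q - {v}" using z by auto
        then obtain a where a: "a \<in> verts A - {v}" "reach (del_verts Q {v}) z a" using cond by blast
        have "reach (del_verts ?H {v}) z a" using del_mono[OF sQ a(2)] .
        moreover have "reach (del_verts ?H {v}) a a0" using bc_reach[OF wfA bcA a(1) a0] by (rule del_mono[OF sA])
        ultimately show ?thesis by (rule reach_trans)
      qed
    qed
  qed
  have con: "connected_graph ?H"
  proof (rule connected_root[of x])
    show "x \<in> verts ?H" using xy by simp
  next
    fix z assume z: "z \<in> verts ?H"
    have cA: "connected_graph A" using bcA by (simp add: biconnected_def)
    have r1: "reach ?H z x" if "z \<noteq> y"
    proof -
      have "reach (del_verts ?H {y}) z x"
        using dcon[of y] xy z that by (intro connectedD) auto
      then show ?thesis by (rule reach_mono[rotated 2]) auto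
    qed
    show "reach ?H z x"
    proof (cases "z = y")
      case True
      then have "reach A z x" using cA xy by (intro connectedD) auto
      then show ?thesis by (rule reach_mono[rotated 2]) auto
    next
      case False then show ?thesis using r1 by blast
    qed
  qed
  show ?thesis using fin con dcon by (intro bc_intro) auto
qed

lemma wf_union: "wf_graph A \<Longrightarrow> wf_graph Q \<Longrightarrow> wf_graph (verts A \<union> verts Q, edges A \<union> edges Q)"
  unfolding wf_graph_def by fastforce

lemma ear_contra:
  assumes b1: "is_block C B1" and b2: "is_block C B2" and ne: "B1 \<noteq> B2"
    and wfQ: "wf_graph Q" and QC: "verts Q \<subseteq> verts C" "edges Q \<subseteq> edges C"
    and B2Q: "verts B2 \<subseteq> verts Q" "edges B2 \<subseteq> edges Q"
    and xy: "x \<noteq> y" "x \<in> verts B1" "y \<in> verts B1"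
    and cond: "\<And>v z. z \<in> verts Q - {v} \<Longrightarrow> \<exists>a\<in>verts B1 - {v}. reach (del_verts Q {v}) z a"
  shows False
proof -
  let ?H = "(verts B1 \<union> verts Q, edges B1 \<union> edges Q)"
  have s1: "subgraph B1 C" "biconnected B1" using b1 by (auto simp: is_block_def)
  have s2: "subgraph B2 C" "biconnected B2" using b2 by (auto simp: is_block_def)
  have wf1: "wf_graph B1" and wf2: "wf_graph B2" using s1 s2 by (auto simp: subgraph_def)
  have bcH: "biconnected ?H" using ear[OF s1(2) wf1 wfQ xy cond] by blast
  have wfH: "wf_graph ?H" using wf_union[OF wf1 wfQ] .
  have HC: "subgraph ?H C" using wfH QC s1(1) by (auto simp: subgraph_def)
  have "subgraph B1 ?H" using wf1 by (auto simp: subgraph_def)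
  then have "?H = B1" using b1 bcH HC unfolding is_block_def by blast
  have "subgraph B2 ?H" using wf2 B2Q by (auto simp: subgraph_def)
  then have "?H = B2" using b2 bcH HC unfolding is_block_def by blast
  with \<open>?H = B1\<close> ne show False by simp
qed



lemma not_two:
  assumes b: "is_block C B" and b': "is_block C B'" and ne: "B \<noteq> B'"
    and xy: "x \<noteq> y" "x \<in> verts B" "y \<in> verts B" "x \<in> verts B'" "y \<in> verts B'"
  shows False
proof -
  have wf': "wf_graph B'" and bc': "biconnected B'" and sub': "verts B' \<subseteq> verts C" "edges B' \<subseteq> edges C"
    using b' by (auto simp: is_block_def subgraph_def)
  show False
  proof (rule ear_contra[OF b b' ne wf' sub' order_refl order_refl xy(1-3)])
    fix v z assume z: "z \<in> verts B' - {v}"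
    define a where "a = (if v = x then y else x)"
    have a: "a \<in> verts B - {v}" "a \<in> verts B' - {v}" using xy by (auto simp: a_def)
    show "\<exists>a\<in>verts B - {v}. reach (del_verts B' {v}) z a"
      using a bc_reach[OF wf' bc' z a(2)] by blast
  qed
qed

locale L =
  fixes G :: "'a graph" and t :: nat and X :: "'a set" and K :: "'a set"
    and a1 a2 a3 a4 :: 'a and B1 B2 B3 :: "'a graph"
  assumes wfG: "wf_graph G"
    and nontriv: "\<not> trivial_instance G t"
    and modX: "modulator G X"
    and Kc: "K \<in> components (del_verts G X)"
    and ad1: "bc_adj (induced G K) a1 B1" and ad2: "bc_adj (induced G K) a2 B1"
    and ad3: "bc_adj (induced G K) a2 B2" and ad4: "bc_adj (induced G K) a3 B2"
    and ad5: "bc_adj (induced G K) a3 B3" and ad6: "bc_adj (induced G K) a4 B3"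
    and dA: "distinct [a1, a2, a3, a4]" and dB: "distinct [B1, B2, B3]"
    and nbU: "nbhd G ((verts B1 \<union> verts B2 \<union> verts B3) - {a1, a4}) = {a1, a4}"
begin

abbreviation "C \<equiv> induced G K"
abbreviation "V \<equiv> verts G"
abbreviation "V1 \<equiv> verts B1"
abbreviation "V2 \<equiv> verts B2"
abbreviation "V3 \<equiv> verts B3"
definition "U = (V1 \<union> V2 \<union> V3) - {a1, a4}"
definition "U2 = (V2 \<union> V3) - {a2, a4}"
abbreviation "G' \<equiv> contract_into G V1 a1"

lemma finV: "finite V" using wfG by (rule wf_finite)

lemma blk: "is_block C B1" "is_block C B2" "is_block C B3"
  using ad1 ad3 ad5 by (auto simp: bc_adj_def)

lemma mem: "a1 \<in> V1" "a2 \<in> V1" "a2 \<in> V2" "a3 \<in> V2" "a3 \<in> V3" "a4 \<in> V3"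
  using ad1 ad2 ad3 ad4 ad5 ad6 by (auto simp: bc_adj_def)

lemma dist: "a1 \<noteq> a2" "a1 \<noteq> a3" "a1 \<noteq> a4" "a2 \<noteq> a3" "a2 \<noteq> a4" "a3 \<noteq> a4"
  "B1 \<noteq> B2" "B1 \<noteq> B3" "B2 \<noteq> B3"
  using dA dB by auto

lemma bsub: "wf_graph B1" "wf_graph B2" "wf_graph B3"
  "biconnected B1" "biconnected B2" "biconnected B3"
  "V1 \<subseteq> V \<inter> K" "V2 \<subseteq> V \<inter> K" "V3 \<subseteq> V \<inter> K"
  "edges B1 \<subseteq> edges C" "edges B2 \<subseteq> edges C" "edges B3 \<subseteq> edges C"
  using blk by (auto simp: is_block_def subgraph_def)

lemma edgesC: "edges C = {e \<in> edges G. e \<subseteq> K}" by simp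

lemma KX: "K \<subseteq> V - X"
proof
  fix v assume "v \<in> K"
  then obtain u where "K = {v. reach (del_verts G X) u v}" using Kc by (auto simp: components_def)
  then have "reach (del_verts G X) u v" using \<open>v \<in> K\<close> by blast
  then have "v \<in> verts (del_verts G X)" by (rule reach_verts[THEN conjunct2])
  then show "v \<in> V - X" by simp
qed

lemma V12: "V1 \<inter> V2 \<subseteq> {a2}"
proof
  fix x assume x: "x \<in> V1 \<inter> V2"
  show "x \<in> {a2}"
  proof (rule ccontr)
    assume "x \<notin> {a2}"
    then show False using not_two[OF blk(1) blk(2) dist(7), of x a2] x mem by auto
  qed
qed

lemma V23: "V2 \<inter> V3 \<subseteq> {a3}"
proof
  fix x assume x: "x \<in> V2 \<inter> V3"
  show "x \<in> {a3}"
  proof (rule ccontr)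
    assume "x \<notin> {a3}"
    then show False using not_two[OF blk(2) blk(3) dist(9), of x a3] x mem by auto
  qed
qed

lemma nm: "a3 \<notin> V1" "a1 \<notin> V2" "a2 \<notin> V3" "a4 \<notin> V2"
  using V12 V23 mem dist by blast+

lemma r2: "x \<in> V2 - {v} \<Longrightarrow> y \<in> V2 - {v} \<Longrightarrow> reach (del_verts B2 {v}) x y"
  using bc_reach[OF bsub(2) bsub(5)] by blast
lemma r3: "x \<in> V3 - {v} \<Longrightarrow> y \<in> V3 - {v} \<Longrightarrow> reach (del_verts B3 {v}) x y"
  using bc_reach[OF bsub(3) bsub(6)] by blast

lemma V13: "V1 \<inter> V3 = {}"
proof (rule ccontr)
  assume "V1 \<inter> V3 \<noteq> {}"
  then obtain r where r: "r \<in> V1" "r \<in> V3" by blast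
  have ra: "r \<noteq> a2" "r \<noteq> a3" using r nm by auto
  let ?Q = "(V2 \<union> V3, edges B2 \<union> edges B3)"
  have wfQ: "wf_graph ?Q" using wf_union[OF bsub(2) bsub(3)] .
  have s2: "V2 \<subseteq> verts ?Q" "edges B2 \<subseteq> edges ?Q" and s3: "V3 \<subseteq> verts ?Q" "edges B3 \<subseteq> edges ?Q" by auto
  show False
  proof (rule ear_contra[OF blk(1) blk(2) dist(7) wfQ _ _ s2 dist(1) mem(1) mem(2)])
    show "verts ?Q \<subseteq> verts C" "edges ?Q \<subseteq> edges C" using bsub by auto
  next
    fix v z assume z: "z \<in> verts ?Q - {v}"
    show "\<exists>a\<in>V1 - {v}. reach (del_verts ?Q {v}) z a"
    proof (cases "z \<in> V2")
      case True
      show ?thesis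
      proof (cases "v = a2")
        case False
        have "reach (del_verts ?Q {v}) z a2" using r2[of z v a2] True z False mem by (intro del_mono[OF s2]) auto
        then show ?thesis using mem False by blast
      next
        case va: True
        have "reach (del_verts ?Q {v}) z a3" using r2[of z v a3] True z va mem dist by (intro del_mono[OF s2]) auto
        moreover have "reach (del_verts ?Q {v}) a3 r" using r3[of a3 v r] va mem ra r dist by (intro del_mono[OF s3]) auto
        ultimately have "reach (del_verts ?Q {v}) z r" by (rule reach_trans)
        then show ?thesis using r va ra by blast
      qed
    next
      case False
      then have zV3: "z \<in> V3" using z by auto
      show ?thesis
      proof (cases "v = r")
        case False
        have "reach (del_verts ?Q {v}) z r" using r3[of z v r] zV3 z False r by (intro del_mono[OF s3]) auto
        then show ?thesis using r False by blast
      next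
        case vr: True
        have "reach (del_verts ?Q {v}) z a3" using r3[of z v a3] zV3 z vr ra mem by (intro del_mono[OF s3]) auto
        moreover have "reach (del_verts ?Q {v}) a3 a2" using r2[of a3 v a2] vr mem ra by (intro del_mono[OF s2]) auto
        ultimately have "reach (del_verts ?Q {v}) z a2" by (rule reach_trans)
        then show ?thesis using mem vr ra by blast
      qed
    qed
  qed
qed

lemma a4V1: "a4 \<notin> V1" using V13 mem by blast

end


lemma wf_add_edge:
  assumes wf: "wf_graph A" and xu: "x \<noteq> u" and u: "u \<in> verts A"
  shows "wf_graph (verts A \<union> {x}, edges A \<union> {{x, u}})"
  unfolding wf_graph_def
proof (intro conjI ballI)
  show "finite (verts (verts A \<union> {x}, edges A \<union> {{x, u}}))" using wf_finite[OF wf] by simp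
next
  fix e assume "e \<in> edges (verts A \<union> {x}, edges A \<union> {{x, u}})"
  then consider "e \<in> edges A" | "e = {x, u}" by auto
  then show "\<exists>p q. p \<noteq> q \<and> e = {p, q} \<and> p \<in> verts (verts A \<union> {x}, edges A \<union> {{x, u}}) \<and> q \<in> verts (verts A \<union> {x}, edges A \<union> {{x, u}})"
  proof cases
    case 1
    then obtain p q where "p \<noteq> q" "e = {p, q}" "p \<in> verts A" "q \<in> verts A" using wfD[OF wf] by blast
    then show ?thesis by auto
  next
    case 2 then show ?thesis using xu u by auto
  qed
qed

context L begin

lemma U2sub: "U2 \<subseteq> U" "U2 \<inter> V1 = {}" "a2 \<notin> U2" "a4 \<notin> U2" "a1 \<notin> U2" "a3 \<in> U2"
  using nm V12 V13 mem dist by (auto simp: U2_def U_def)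

lemma bf6:
  assumes x: "x \<in> V1" "x \<noteq> a2" and u: "u \<in> U2" and e: "{x, u} \<in> edges G"
  shows False
proof -
  have xK: "x \<in> V \<inter> K" using x bsub by blast
  have uK: "u \<in> V \<inter> K" using u bsub by (auto simp: U2_def)
  have eC: "{x, u} \<in> edges C" using e xK uK by simp
  have xu: "x \<noteq> u" using wf_edge[OF wfG e] by blast
  have xn: "x \<notin> V2" "x \<notin> V3" "x \<noteq> a3" using x V12 V13 nm by auto
  have ua: "u \<noteq> a2" "u \<noteq> a4" using u by (auto simp: U2_def)
  have reu: "reach (del_verts Q {v}) u x"
    if "{x, u} \<in> edges Q" "x \<in> verts Q" "u \<in> verts Q" "v \<noteq> x" "v \<noteq> u" for Q v
  proof (rule reach_edge)
    have "{u, x} = {x, u}" by (rule insert_commute)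
    then show "{u, x} \<in> edges (del_verts Q {v})" using that by auto
  qed (use that in auto)
  show False
  proof (cases "u \<in> V2")
    case True
    let ?Q = "(V2 \<union> {x}, edges B2 \<union> {{x, u}})"
    have wfQ: "wf_graph ?Q" using wf_add_edge[OF bsub(2) xu True] .
    have s2: "V2 \<subseteq> verts ?Q" "edges B2 \<subseteq> edges ?Q" by auto
    show False
    proof (rule ear_contra[OF blk(1) blk(2) dist(7) wfQ _ _ s2 dist(1) mem(1) mem(2)])
      show "verts ?Q \<subseteq> verts C" "edges ?Q \<subseteq> edges C" using bsub eC xK by auto
    next
      fix v z assume z: "z \<in> verts ?Q - {v}"
      show "\<exists>a\<in>V1 - {v}. reach (del_verts ?Q {v}) z a"
      proof (cases "z = x")
        case True
        then have "x \<in> verts (del_verts ?Q {v})" using z by auto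
        then have "reach (del_verts ?Q {v}) x x" by (rule reach_refl)
        then show ?thesis using x z True by blast
      next
        case zx: False
        then have zV2: "z \<in> V2" using z by auto
        show ?thesis
        proof (cases "v = a2")
          case False
          have "reach (del_verts ?Q {v}) z a2" using r2[of z v a2] zV2 z False mem by (intro del_mono[OF s2]) auto
          then show ?thesis using mem False by blast
        next
          case va: True
          have "reach (del_verts ?Q {v}) z u" using r2[of z v u] zV2 z va True ua by (intro del_mono[OF s2]) auto
          moreover have "reach (del_verts ?Q {v}) u x" using va x ua True by (intro reu) auto
          ultimately have "reach (del_verts ?Q {v}) z x" by (rule reach_trans)
          then show ?thesis using x va by blast
        qed
      qed
    qed
  next
    case False
    then have uV3: "u \<in> V3" "u \<noteq> a3" using u mem by (auto simp: U2_def)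
    let ?Q = "(V2 \<union> V3 \<union> {x}, edges B2 \<union> edges B3 \<union> {{x, u}})"
    have wfQ: "wf_graph ?Q" using wf_add_edge[OF wf_union[OF bsub(2) bsub(3)] xu] uV3 by simp
    have s2: "V2 \<subseteq> verts ?Q" "edges B2 \<subseteq> edges ?Q" and s3: "V3 \<subseteq> verts ?Q" "edges B3 \<subseteq> edges ?Q" by auto
    show False
    proof (rule ear_contra[OF blk(1) blk(2) dist(7) wfQ _ _ s2 dist(1) mem(1) mem(2)])
      show "verts ?Q \<subseteq> verts C" "edges ?Q \<subseteq> edges C" using bsub eC xK by auto
    next
      fix v z assume z: "z \<in> verts ?Q - {v}"
      have toX: "\<exists>a\<in>V1 - {v}. reach (del_verts ?Q {v}) z a" if "reach (del_verts ?Q {v}) z u" "v \<noteq> x" "v \<noteq> u"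
      proof -
        have "reach (del_verts ?Q {v}) u x" using that uV3 by (intro reu) auto
        with that(1) have "reach (del_verts ?Q {v}) z x" by (rule reach_trans)
        then show ?thesis using x that by blast
      qed
      show "\<exists>a\<in>V1 - {v}. reach (del_verts ?Q {v}) z a"
      proof (cases "z = x")
        case True
        then have "x \<in> verts (del_verts ?Q {v})" using z by auto
        then have "reach (del_verts ?Q {v}) x x" by (rule reach_refl)
        then show ?thesis using x z True by blast
      next
        case zx: False
        show ?thesis
        proof (cases "z \<in> V2")
          case zV2: True
          show ?thesis
          proof (cases "v = a2")
            case False
            have "reach (del_verts ?Q {v}) z a2" using r2[of z v a2] zV2 z False mem by (intro del_mono[OF s2]) auto
            then show ?thesis using mem False by blast
          next
            case va: True
            have "reach (del_verts ?Q {v}) z a3" using r2[of z v a3] zV2 z va mem dist by (intro del_mono[OF s2]) auto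
            moreover have "reach (del_verts ?Q {v}) a3 u" using r3[of a3 v u] va uV3 ua mem dist by (intro del_mono[OF s3]) auto
            ultimately have "reach (del_verts ?Q {v}) z u" by (rule reach_trans)
            moreover have "v \<noteq> x" "v \<noteq> u" using va x ua by auto
            ultimately show ?thesis by (rule toX)
          qed
        next
          case False
          then have zV3: "z \<in> V3" using z zx by auto
          show ?thesis
          proof (cases "v = a2 \<or> v = a3")
            case True
            have "reach (del_verts ?Q {v}) z u" using r3[of z v u] zV3 z True uV3 ua by (intro del_mono[OF s3]) auto
            moreover have "v \<noteq> x" "v \<noteq> u" using True xn uV3 ua x(2) by auto
            ultimately show ?thesis by (rule toX)
          next
            case False
            have "reach (del_verts ?Q {v}) z a3" using r3[of z v a3] zV3 z False mem by (intro del_mono[OF s3]) auto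
            moreover have "reach (del_verts ?Q {v}) a3 a2" using r2[of a3 v a2] False mem by (intro del_mono[OF s2]) auto
            ultimately have "reach (del_verts ?Q {v}) z a2" by (rule reach_trans)
            then show ?thesis using mem False by blast
          qed
        qed
      qed
    qed
  qed
qed

lemma NB: assumes "{x, y} \<in> edges G" "x \<in> U" shows "y \<in> U \<union> {a1, a4}"
proof (rule ccontr)
  assume "y \<notin> U \<union> {a1, a4}"
  moreover have "y \<in> V" using wf_edge[OF wfG assms(1)] by blast
  ultimately have "y \<in> nbhd G U" using assms unfolding nbhd_def by blast
  then show False using nbU \<open>y \<notin> U \<union> {a1, a4}\<close> unfolding U_def by blast
qed

lemma nbU2: "nbhd G U2 = {a2, a4}"
proof
  show "nbhd G U2 \<subseteq> {a2, a4}"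
  proof
    fix x assume "x \<in> nbhd G U2"
    then obtain u where u: "u \<in> U2" "{u, x} \<in> edges G" "x \<notin> U2" "x \<in> V" by (auto simp: nbhd_def)
    then have "x \<in> U \<union> {a1, a4}" using NB U2sub by blast
    show "x \<in> {a2, a4}"
    proof (rule ccontr)
      assume "x \<notin> {a2, a4}"
      then have "x \<in> V1" "x \<noteq> a2" using \<open>x \<in> U \<union> {a1, a4}\<close> u(3) mem unfolding U_def U2_def by auto
      then show False using bf6 u by (metis insert_commute)
    qed
  qed
next
  have c2: "connected_graph B2" and c3: "connected_graph B3" using bsub(5,6) by (auto simp: biconnected_def)
  obtain y where y: "{a2, y} \<in> edges B2" "y \<noteq> a2" "y \<in> V2"
    using first_step[OF bsub(2) connectedD[OF c2 mem(3) mem(4)] dist(4)] by blast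
  obtain y' where y': "{a4, y'} \<in> edges B3" "y' \<noteq> a4" "y' \<in> V3"
    using first_step[OF bsub(3) connectedD[OF c3 mem(6) mem(5)]] dist(6) by metis
  have "y \<in> U2" using y nm by (auto simp: U2_def)
  moreover have "y' \<in> U2" using y' nm by (auto simp: U2_def)
  moreover have "a2 \<in> V" "a4 \<in> V" using mem bsub by auto
  moreover have "{y, a2} \<in> edges G" "{y', a4} \<in> edges G" using y y' bsub by (auto simp: insert_commute)
  ultimately show "{a2, a4} \<subseteq> nbhd G U2" using U2sub unfolding nbhd_def by blast
qed

lemma conU2: "connected_graph (induced G U2)"
proof (rule connected_root[of a3])
  show "a3 \<in> verts (induced G U2)" using U2sub mem bsub by auto
next
  fix z assume "z \<in> verts (induced G U2)"
  then have z: "z \<in> U2" by simp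
  have s2: "verts (del_verts B2 {a2}) \<subseteq> verts (induced G U2)" "edges (del_verts B2 {a2}) \<subseteq> edges (induced G U2)"
    using bsub nm unfolding U2_def by auto
  have s3: "verts (del_verts B3 {a4}) \<subseteq> verts (induced G U2)" "edges (del_verts B3 {a4}) \<subseteq> edges (induced G U2)"
    using bsub nm unfolding U2_def by auto
  show "reach (induced G U2) z a3"
  proof (cases "z \<in> V2")
    case True
    then have "reach (del_verts B2 {a2}) z a3" using r2 z mem dist by (auto simp: U2_def)
    then show ?thesis by (rule reach_mono[OF s2(2) s2(1)])
  next
    case False
    then have "reach (del_verts B3 {a4}) z a3" using r3 z mem dist by (auto simp: U2_def)
    then show ?thesis by (rule reach_mono[OF s3(2) s3(1)])
  qed
qed

end


lemma wf_contract:
  assumes wf: "wf_graph G" and a: "a \<in> W"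
  shows "wf_graph (contract_into G W a)"
  unfolding wf_graph_def
proof (intro conjI ballI)
  show "finite (verts (contract_into G W a))" using wf_finite[OF wf] by simp
next
  fix e assume "e \<in> edges (contract_into G W a)"
  then consider "e \<in> edges G" "e \<inter> W = {}" | w where "e = {a, w}" "w \<in> nbhd G W" by auto
  then show "\<exists>u v. u \<noteq> v \<and> e = {u, v} \<and> u \<in> verts (contract_into G W a) \<and> v \<in> verts (contract_into G W a)"
  proof cases
    case 1
    then obtain u v where "u \<noteq> v" "e = {u, v}" "u \<in> verts G" "v \<in> verts G" using wfD[OF wf] by blast
    then show ?thesis using 1 by auto
  next
    case 2
    then have "w \<in> verts G" "w \<notin> W" by (auto simp: nbhd_def)
    then show ?thesis using 2 a by (intro exI[of _ a] exI[of _ w]) auto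
  qed
qed

lemma glue_sub:
  assumes "has_tw_le G1 k" "has_tw_le G2 k" "verts G1 \<inter> verts G2 \<subseteq> {c}"
    "finite (verts G1)" "finite (verts G2)" "wf_graph H"
    "verts H \<subseteq> verts G1 \<union> verts G2" "edges H \<subseteq> edges G1 \<union> edges G2"
  shows "has_tw_le H k"
proof -
  have h: "has_tw_le (verts G1 \<union> verts G2, edges G1 \<union> edges G2) k" by (rule tw_glue[OF assms(1-3)])
  show ?thesis
  proof (rule tw_sub[OF _ assms(6) _ _ h])
    show "finite (verts (verts G1 \<union> verts G2, edges G1 \<union> edges G2))" using assms(4,5) by simp
    show "verts H \<subseteq> verts (verts G1 \<union> verts G2, edges G1 \<union> edges G2)" using assms(7) by simp
    show "edges H \<subseteq> edges (verts G1 \<union> verts G2, edges G1 \<union> edges G2)" using assms(8) by simp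
  qed
qed

context L begin

lemma wfG': "wf_graph G'" using wf_contract[OF wfG mem(1)] .

lemma a1V: "a1 \<in> V" "a2 \<in> V" "a3 \<in> V" "a4 \<in> V" using mem bsub by auto

lemma conB1: "connected_graph B1" using bsub(4) by (simp add: biconnected_def)

lemma E1G: "edges B1 \<subseteq> edges G" using bsub(10) by auto

lemma fwd:
  assumes sol: "is_solution G t S"
  shows "\<exists>S'. is_solution G' t S'"
proof -
  have SV: "S \<subseteq> V" and cS: "card S \<le> t" and twS: "tw (del_verts G S) \<le> 2" using sol by (auto simp: is_solution_def)
  have hS: "has_tw_le (del_verts G S) 2" using twS tw_le2[OF wf_del[OF wfG]] by blast
  have finS: "finite S" using SV finV finite_subset by blast
  show ?thesis
  proof (cases "S \<inter> V1 = {}")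
    case False
    define S' where "S' = insert a1 (S - V1)"
    have "card (S - V1) < card S" using False finS by (intro psubset_card_mono) auto
    moreover have "card S' \<le> Suc (card (S - V1))" unfolding S'_def by (rule card_insert_le_m1) simp_all
    ultimately have cS': "card S' \<le> t" using cS by linarith
    have S'V: "S' \<subseteq> verts G'" using SV by (auto simp: S'_def)
    have "has_tw_le (del_verts G' S') 2"
    proof (rule tw_sub[OF _ wf_del[OF wfG'] _ _ hS])
      show "finite (verts (del_verts G S))" using finV by simp
      show "verts (del_verts G' S') \<subseteq> verts (del_verts G S)" by (auto simp: S'_def)
      show "edges (del_verts G' S') \<subseteq> edges (del_verts G S)"
      proof
        fix e assume e: "e \<in> edges (del_verts G' S')"
        then have esub: "e \<subseteq> verts G' - S'" by simp
        have "e \<in> edges G'" using e by simp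
        then consider "e \<in> edges G" "e \<inter> V1 = {}" | w where "e = {a1, w}" by auto
        then show "e \<in> edges (del_verts G S)"
        proof cases
          case 1 then show ?thesis using esub by (auto simp: S'_def)
        next
          case 2 then show ?thesis using esub by (auto simp: S'_def)
        qed
      qed
    qed
    then have "tw (del_verts G' S') \<le> 2" using tw_le2[OF wf_del[OF wfG']] by blast
    then show ?thesis using S'V cS' unfolding is_solution_def by blast
  next
    case True
    have S'V: "S \<subseteq> verts G'" using SV True by auto
    have conW: "connected_graph (induced (del_verts G S) V1)"
    proof (rule connected_root[of a1])
      show "a1 \<in> verts (induced (del_verts G S) V1)" using mem True a1V by auto
    next
      fix z assume "z \<in> verts (induced (del_verts G S) V1)"
      then have z: "z \<in> V1" by simp
      have r: "reach B1 z a1" using connectedD[OF conB1 z mem(1)] .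
      show "reach (induced (del_verts G S) V1) z a1"
      proof (rule reach_mono[OF _ _ r])
        show "verts B1 \<subseteq> verts (induced (del_verts G S) V1)" using bsub True by auto
        show "edges B1 \<subseteq> edges (induced (del_verts G S) V1)"
        proof
          fix e assume e: "e \<in> edges B1"
          then have "e \<subseteq> V1" using wf_edge_sub[OF bsub(1)] by blast
          then show "e \<in> edges (induced (del_verts G S) V1)" using e E1G bsub True by auto
        qed
      qed
    qed
    have hc: "has_tw_le (contract_into (del_verts G S) V1 a1) 2"
      by (rule tw_contract[OF _ _ conW _ hS]) (use finV bsub True mem in auto)
    have "has_tw_le (del_verts G' S) 2"
    proof (rule tw_sub[OF _ wf_del[OF wfG'] _ _ hc])
      show "finite (verts (contract_into (del_verts G S) V1 a1))" using finV by simp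
      show "verts (del_verts G' S) \<subseteq> verts (contract_into (del_verts G S) V1 a1)" by auto
      show "edges (del_verts G' S) \<subseteq> edges (contract_into (del_verts G S) V1 a1)"
      proof
        fix e assume e: "e \<in> edges (del_verts G' S)"
        then have esub: "e \<subseteq> verts G' - S" by simp
        have "e \<in> edges G'" using e by simp
        then consider "e \<in> edges G" "e \<inter> V1 = {}" | w where "e = {a1, w}" "w \<in> nbhd G V1" by auto
        then show "e \<in> edges (contract_into (del_verts G S) V1 a1)"
        proof cases
          case 1 then show ?thesis using esub wf_edge_sub[OF wfG 1(1)] by auto
        next
          case 2
          then obtain u where u: "u \<in> V1" "{u, w} \<in> edges G" "w \<notin> V1" "w \<in> V" by (auto simp: nbhd_def)
          have "w \<notin> S" using esub 2 by auto
          moreover have "u \<notin> S" "u \<in> V" using u True bsub by auto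
          ultimately have "w \<in> nbhd (del_verts G S) V1" using u unfolding nbhd_def by auto
          then show ?thesis using 2 by auto
        qed
      qed
    qed
    then have "tw (del_verts G' S) \<le> 2" using tw_le2[OF wf_del[OF wfG']] by blast
    then show ?thesis using S'V cS unfolding is_solution_def by blast
  qed
qed

end


context L begin

lemma Vsub: "V1 \<subseteq> U \<union> {a1, a4}" "U \<subseteq> K" "U \<subseteq> V" "a1 \<in> K" "a4 \<in> K" "U2 \<subseteq> V"
  using bsub mem unfolding U_def U2_def by auto

lemma twX: "has_tw_le (del_verts G X) 2"
  using modX tw_le2[OF wf_del[OF wfG]] by (simp add: modulator_def)

lemma hQ: assumes "W \<subseteq> K" shows "has_tw_le (induced G W) 2"
proof (rule tw_sub[OF _ wf_induced[OF wfG] _ _ twX])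
  show "finite (verts (del_verts G X))" using finV by simp
  show "verts (induced G W) \<subseteq> verts (del_verts G X)" using assms KX by auto
  show "edges (induced G W) \<subseteq> edges (del_verts G X)" using assms KX by auto
qed

lemma EC:
  assumes e: "e \<in> edges G"
  shows "e \<subseteq> U \<union> {a1, a4} \<or> e \<inter> U = {}"
proof -
  obtain x y where xy: "e = {x, y}" "x \<noteq> y" using wfD[OF wfG e] by blast
  have "x \<in> U \<Longrightarrow> y \<in> U \<union> {a1, a4}" using NB e xy by blast
  moreover have "y \<in> U \<Longrightarrow> x \<in> U \<union> {a1, a4}" using NB e xy by (metis insert_commute)
  ultimately show ?thesis using xy by auto
qed

lemma Rsub:
  "verts (induced G (V - U - S')) \<subseteq> verts (del_verts G' S')"
  "edges (induced G (V - U - S')) \<subseteq> edges (del_verts G' S')"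
proof -
  have vs: "V - U - S' \<subseteq> verts G' - S'"
  proof
    fix x assume x: "x \<in> V - U - S'"
    show "x \<in> verts G' - S'"
    proof (cases "x \<in> V1")
      case True
      then have "x = a1" using x Vsub(1) a4V1 by blast
      then show ?thesis using x by simp
    next
      case False then show ?thesis using x by simp
    qed
  qed
  then show "verts (induced G (V - U - S')) \<subseteq> verts (del_verts G' S')" by auto
  show "edges (induced G (V - U - S')) \<subseteq> edges (del_verts G' S')"
  proof
    fix e assume "e \<in> edges (induced G (V - U - S'))"
    then have e: "e \<in> edges G" "e \<subseteq> V - U - S'" by auto
    have "e \<in> edges G'"
    proof (cases "e \<inter> V1 = {}")
      case True then show ?thesis using e by simp
    next
      case False
      then obtain p where p: "p \<in> e" "p \<in> V1" by blast
      then have pa: "p = a1" using e Vsub(1) a4V1 by blast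
      obtain x y where xy: "e = {x, y}" "x \<noteq> y" using wfD[OF wfG e(1)] by blast
      obtain w where w: "e = {a1, w}" "w \<noteq> a1" using xy p pa by (metis insert_commute insertE singletonD)
      have "w \<in> V - U - S'" using e w by auto
      then have "w \<notin> V1" using Vsub(1) a4V1 w by blast
      then have "w \<in> nbhd G V1" using e w mem \<open>w \<in> V - U - S'\<close> unfolding nbhd_def by blast
      then show ?thesis using w by auto
    qed
    then show "e \<in> edges (del_verts G' S')" using e vs by auto
  qed
qed

lemma hR:
  assumes sol: "has_tw_le (del_verts G' S') 2" and wfH: "wf_graph H"
    and sv: "verts H \<subseteq> V - U - S'" and se: "edges H \<subseteq> edges (induced G (V - U - S'))"
  shows "has_tw_le H 2"
proof (rule tw_sub[OF _ wfH _ _ sol])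
  show "finite (verts (del_verts G' S'))" using finV by simp
  show "verts H \<subseteq> verts (del_verts G' S')" using sv Rsub(1) by auto
  show "edges H \<subseteq> edges (del_verts G' S')" using se Rsub(2)[of S'] by (rule subset_trans)
qed

end


context L begin

lemma conv_cut:
  assumes sol: "has_tw_le (del_verts G' S') 2" and S'V: "S' \<subseteq> verts G'"
    and c: "c = a1 \<or> c = a4" and cS: "c \<in> S" and SS: "S' - U \<subseteq> S" and SV: "S \<subseteq> V"
  shows "has_tw_le (del_verts G S) 2"
proof -
  define c' where "c' = (if c = a1 then a4 else a1)"
  have cc: "{c, c'} = {a1, a4}" using c dist by (auto simp: c'_def)
  let ?G1 = "induced G (V - U - S)"
  let ?G2 = "induced G ((U \<union> {c'}) - S)"
  have h1: "has_tw_le ?G1 2"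
  proof (rule hR[OF sol wf_induced[OF wfG]])
    show "verts ?G1 \<subseteq> V - U - S'" using SS by auto
    show "edges ?G1 \<subseteq> edges (induced G (V - U - S'))" using SS by auto
  qed
  have "(U \<union> {c'}) - S \<subseteq> K" using Vsub c by (auto simp: c'_def)
  then have h2: "has_tw_le ?G2 2" by (rule hQ)
  show ?thesis
  proof (rule glue_sub[OF h1 h2 _ _ _ wf_del[OF wfG]])
    show "verts ?G1 \<inter> verts ?G2 \<subseteq> {c'}" by auto
    show "finite (verts ?G1)" "finite (verts ?G2)" using finV by auto
    show "verts (del_verts G S) \<subseteq> verts ?G1 \<union> verts ?G2" by auto
    show "edges (del_verts G S) \<subseteq> edges ?G1 \<union> edges ?G2"
    proof
      fix e assume "e \<in> edges (del_verts G S)"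
      then have e: "e \<in> edges G" "e \<subseteq> V - S" by auto
      from EC[OF e(1)] show "e \<in> edges ?G1 \<union> edges ?G2"
      proof
        assume "e \<subseteq> U \<union> {a1, a4}"
        then have "e \<subseteq> U \<union> {c, c'}" using cc by simp
        then have "e \<subseteq> (U \<union> {c'}) - S" using e(2) cS by blast
        then show ?thesis using e by simp
      next
        assume "e \<inter> U = {}"
        then show ?thesis using e by auto
      qed
    qed
  qed
qed

lemma card_S'_le:
  assumes fin: "finite S'" and u: "u \<in> S'"
  shows "card (insert a (S' - {u})) \<le> card S'"
proof -
  have "card (insert a (S' - {u})) \<le> Suc (card (S' - {u}))" by (rule card_insert_le_m1) (use fin in simp_all)
  also have "\<dots> = card S'" by (rule card_Suc_Diff1[OF fin u])
  finally show ?thesis .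
qed

end


context L begin

lemma case3a:
  assumes sol: "has_tw_le (del_verts G' S') 2" and S'V: "S' \<subseteq> verts G'"
    and dis: "S' \<inter> (U \<union> {a1, a4}) = {}"
    and nr: "\<not> reach (induced G (V - U - S')) a1 a4"
  shows "has_tw_le (del_verts G S') 2"
proof -
  let ?R = "induced G (V - U - S')"
  define Ca where "Ca = {v. reach ?R a1 v}"
  let ?Q2 = "induced G (U \<union> {a1, a4})"
  let ?Ra = "induced ?R Ca"
  let ?Rb = "induced ?R (verts ?R - Ca)"
  have wfR: "wf_graph ?R" by (rule wf_induced[OF wfG])
  have a1R: "a1 \<in> verts ?R" using a1V dis by (auto simp: U_def)
  have a1Ca: "a1 \<in> Ca" unfolding Ca_def using a1R by (simp add: reach_refl)
  have a4Ca: "a4 \<notin> Ca" unfolding Ca_def using nr by simp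
  have CaR: "Ca \<subseteq> verts ?R" unfolding Ca_def using reach_verts by fastforce
  have hQ2: "has_tw_le ?Q2 2" using hQ Vsub by simp
  have hRa: "has_tw_le ?Ra 2"
    by (rule hR[OF sol wf_induced[OF wfR]]) auto
  have hRb: "has_tw_le ?Rb 2"
    by (rule hR[OF sol wf_induced[OF wfR]]) auto
  let ?H1 = "(verts ?Q2 \<union> verts ?Ra, edges ?Q2 \<union> edges ?Ra)"
  have h1: "has_tw_le ?H1 2"
  proof (rule tw_glue[OF hQ2 hRa, of a1])
    show "verts ?Q2 \<inter> verts ?Ra \<subseteq> {a1}" using CaR a4Ca by auto
  qed
  show ?thesis
  proof (rule glue_sub[OF h1 hRb _ _ _ wf_del[OF wfG], of a4])
    show "verts ?H1 \<inter> verts ?Rb \<subseteq> {a4}" using CaR a1Ca by auto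
    show "finite (verts ?H1)" "finite (verts ?Rb)" using finV by auto
    show "verts (del_verts G S') \<subseteq> verts ?H1 \<union> verts ?Rb" using dis by auto
    show "edges (del_verts G S') \<subseteq> edges ?H1 \<union> edges ?Rb"
    proof
      fix e assume "e \<in> edges (del_verts G S')"
      then have e: "e \<in> edges G" "e \<subseteq> V - S'" by auto
      from EC[OF e(1)] show "e \<in> edges ?H1 \<union> edges ?Rb"
      proof
        assume "e \<subseteq> U \<union> {a1, a4}"
        then show ?thesis using e by simp
      next
        assume eU: "e \<inter> U = {}"
        then have eR: "e \<in> edges ?R" using e by auto
        obtain x y where xy: "e = {x, y}" "x \<noteq> y" using wfD[OF wfG e(1)] by blast
        have xyR: "x \<in> verts ?R" "y \<in> verts ?R" using e eU xy by auto
        have cl: "y \<in> Ca" if "x \<in> Ca" "{x, y} \<in> edges ?R" "y \<in> verts ?R" for x y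
        proof -
          have "reach ?R a1 x" using that(1) by (simp add: Ca_def)
          moreover have "reach ?R x y" using that reach_verts[OF calculation] by (intro reach_edge) auto
          ultimately show ?thesis unfolding Ca_def using reach_trans by fastforce
        qed
        show ?thesis
        proof (cases "x \<in> Ca")
          case True
          then have "y \<in> Ca" using cl eR xy xyR by blast
          then have "e \<subseteq> Ca" using True xy by simp
          then show ?thesis using eR by simp
        next
          case False
          then have "y \<notin> Ca" using cl[of y x] eR xy xyR by (metis insert_commute)
          then have "e \<subseteq> verts ?R - Ca" using False xy xyR by simp
          then show ?thesis using eR by simp
        qed
      qed
    qed
  qed
qed

end


context L begin

lemma torso_eq: "torso_nbhd G U2 = (V \<inter> (U2 \<union> {a2, a4}),
   {e \<in> edges G. e \<subseteq> U2 \<union> {a2, a4}} \<union> {{u, v} |u v. u \<in> {a2, a4} \<and> v \<in> {a2, a4} \<and> u \<noteq> v})"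
  unfolding torso_nbhd_def Let_def nbU2 by simp

lemma wf_torso: "wf_graph (torso_nbhd G U2)"
  unfolding torso_eq wf_graph_def
proof (intro conjI ballI)
  show "finite (verts (V \<inter> (U2 \<union> {a2, a4}), {e \<in> edges G. e \<subseteq> U2 \<union> {a2, a4}} \<union> {{u, v} |u v. u \<in> {a2, a4} \<and> v \<in> {a2, a4} \<and> u \<noteq> v}))"
    using finV by simp
next
  fix e assume "e \<in> edges (V \<inter> (U2 \<union> {a2, a4}), {e \<in> edges G. e \<subseteq> U2 \<union> {a2, a4}} \<union> {{u, v} |u v. u \<in> {a2, a4} \<and> v \<in> {a2, a4} \<and> u \<noteq> v})"
  then consider "e \<in> edges G" "e \<subseteq> U2 \<union> {a2, a4}" | u v where "e = {u, v}" "u \<in> {a2, a4}" "v \<in> {a2, a4}" "u \<noteq> v" by auto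
  then show "\<exists>u v. u \<noteq> v \<and> e = {u, v} \<and> u \<in> verts (V \<inter> (U2 \<union> {a2, a4}), {e \<in> edges G. e \<subseteq> U2 \<union> {a2, a4}} \<union> {{u, v} |u v. u \<in> {a2, a4} \<and> v \<in> {a2, a4} \<and> u \<noteq> v}) \<and> v \<in> verts (V \<inter> (U2 \<union> {a2, a4}), {e \<in> edges G. e \<subseteq> U2 \<union> {a2, a4}} \<union> {{u, v} |u v. u \<in> {a2, a4} \<and> v \<in> {a2, a4} \<and> u \<noteq> v})"
  proof cases
    case 1
    then obtain u v where "u \<noteq> v" "e = {u, v}" "u \<in> V" "v \<in> V" using wfD[OF wfG] by blast
    then show ?thesis using 1 by auto
  next
    case 2
    then show ?thesis using a1V by (intro exI[of _ u] exI[of _ v]) auto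
  qed
qed

lemma torso_bad: "\<not> has_tw_le (torso_nbhd G U2) 2"
proof
  assume "has_tw_le (torso_nbhd G U2) 2"
  then have tw: "tw (torso_nbhd G U2) \<le> 2" using tw_le2[OF wf_torso] by blast
  have "subgraph (induced G U2) G" using wf_induced[OF wfG] by (auto simp: subgraph_def)
  moreover have "verts (induced G U2) = U2" using Vsub by auto
  ultimately have "trivial_instance G t" unfolding trivial_instance_def using conU2 tw by metis
  then show False using nontriv by simp
qed

lemma case3b:
  assumes sol: "has_tw_le (del_verts G' S') 2" and S'V: "S' \<subseteq> verts G'"
    and dis: "S' \<inter> (U \<union> {a1, a4}) = {}"
    and rr: "reach (induced G (V - U - S')) a1 a4"
  shows False
proof -
  let ?R = "induced G (V - U - S')"
  let ?H = "del_verts G' S'"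
  have wfR: "wf_graph ?R" by (rule wf_induced[OF wfG])
  obtain w where w: "reach (del_verts ?R {a4}) a1 w" "{w, a4} \<in> edges ?R"
    using reach_last[OF wfR rr dist(3)] by blast
  define P where "P = {v. reach (del_verts ?R {a4}) a1 v}"
  have wfR4: "wf_graph (del_verts ?R {a4})" by (rule wf_del[OF wfR])
  have R4H: "verts (del_verts ?R {a4}) \<subseteq> verts ?H" "edges (del_verts ?R {a4}) \<subseteq> edges ?H"
    using Rsub[of S'] by auto
  have PR: "P \<subseteq> V - U - S' - {a4}" unfolding P_def using reach_verts by fastforce
  have PH: "P \<subseteq> verts ?H" unfolding P_def using R4H reach_verts by fastforce
  have a1R4: "a1 \<in> verts (del_verts ?R {a4})" using reach_verts[OF w(1)] by blast
  have a1P: "a1 \<in> P" unfolding P_def using reach_refl[OF a1R4] by simp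
  have wP: "w \<in> P" unfolding P_def using w(1) by simp
  have conP: "connected_graph (induced ?H P)"
  proof (rule connected_root[of a1])
    show "a1 \<in> verts (induced ?H P)" using a1P PH by auto
  next
    fix z assume "z \<in> verts (induced ?H P)"
    then have "reach (del_verts ?R {a4}) a1 z" by (simp add: P_def)
    then have "reach (induced ?H P) a1 z" unfolding P_def by (rule reach_induced_set[OF wfR4 R4H(2) R4H(1)])
    then show "reach (induced ?H P) z a1" by (rule reach_sym)
  qed
  have a2H: "a2 \<notin> verts ?H" using mem dist by auto
  have hc: "has_tw_le (contract_into ?H P a2) 2"
    by (rule tw_contract[OF _ PH conP _ sol]) (use finV a2H in auto)
  \<comment> \<open>torso is a subgraph of the contraction\<close>
  have inH: "y \<in> verts ?H - P" if "y \<in> U2 \<union> {a4}" for y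
  proof -
    have "y \<in> V" "y \<notin> V1" using that Vsub U2sub a1V a4V1 by auto
    moreover have "y \<notin> S'" "y \<notin> P" using that dis U2sub PR by auto
    ultimately show ?thesis by simp
  qed
  have a4nb: "a4 \<in> nbhd ?H P"
  proof -
    have "{w, a4} \<in> edges ?H" using w(2) Rsub(2)[of S'] by blast
    moreover have "a4 \<in> verts ?H" "a4 \<notin> P" using inH by auto
    ultimately show ?thesis unfolding nbhd_def using wP by blast
  qed
  have ynb: "y \<in> nbhd ?H P" if "y \<in> U2 \<union> {a4}" "{a2, y} \<in> edges G" for y
  proof -
    have yv: "y \<in> verts ?H" "y \<notin> P" using inH[OF that(1)] by auto
    have "y \<in> V" "y \<notin> V1" using that(1) Vsub U2sub a1V a4V1 by auto
    then have "y \<in> nbhd G V1" using that(2) mem unfolding nbhd_def by blast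
    then have "{a1, y} \<in> edges G'" by auto
    moreover have "{a1, y} \<subseteq> verts G' - S'" using yv dis by auto
    ultimately have "{a1, y} \<in> edges ?H" by simp
    then show ?thesis unfolding nbhd_def using yv a1P by blast
  qed
  have "has_tw_le (torso_nbhd G U2) 2"
  proof (rule tw_sub[OF _ wf_torso _ _ hc])
    show "finite (verts (contract_into ?H P a2))" using finV by simp
    show "verts (torso_nbhd G U2) \<subseteq> verts (contract_into ?H P a2)"
      unfolding torso_eq using inH by auto
    show "edges (torso_nbhd G U2) \<subseteq> edges (contract_into ?H P a2)"
    proof
      fix e assume "e \<in> edges (torso_nbhd G U2)"
      then consider "e \<in> edges G" "e \<subseteq> U2 \<union> {a2, a4}"
        | u v where "e = {u, v}" "u \<in> {a2, a4}" "v \<in> {a2, a4}" "u \<noteq> v"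
        unfolding torso_eq by auto
      then show "e \<in> edges (contract_into ?H P a2)"
      proof cases
        case 2
        then have "e = {a2, a4}" by auto
        then show ?thesis using a4nb by auto
      next
        case 1
        show ?thesis
        proof (cases "a2 \<in> e")
          case False
          then have eU: "e \<subseteq> U2 \<union> {a4}" using 1 by auto
          then have "e \<inter> V1 = {}" using U2sub a4V1 by auto
          then have "e \<in> edges G'" using 1 by auto
          moreover have "e \<subseteq> verts G' - S'" "e \<inter> P = {}" using eU inH by auto
          ultimately show ?thesis by auto
        next
          case True
          obtain p q where pq: "p \<noteq> q" "e = {p, q}" using wfD[OF wfG 1(1)] by blast
          obtain y where y: "e = {a2, y}" "y \<noteq> a2" using pq True by (metis insert_commute insertE singletonD)
          have "y \<in> U2 \<union> {a4}" using 1 y by auto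
          then have "y \<in> nbhd ?H P" using ynb 1 y by blast
          then show ?thesis using y by auto
        qed
      qed
    qed
  qed
  then show False using torso_bad by simp
qed

end


context L begin

lemma conv:
  assumes sol: "is_solution G' t S'"
  shows "\<exists>S. is_solution G t S"
proof -
  have S'V: "S' \<subseteq> verts G'" and cS: "card S' \<le> t" and twS: "tw (del_verts G' S') \<le> 2"
    using sol by (auto simp: is_solution_def)
  have hs: "has_tw_le (del_verts G' S') 2" using twS tw_le2[OF wf_del[OF wfG']] by blast
  have S'V2: "S' \<subseteq> V" using S'V a1V by auto
  have finS: "finite S'" using S'V2 finV finite_subset by blast
  have mk: "\<exists>S. is_solution G t S" if "S \<subseteq> V" "card S \<le> t" "has_tw_le (del_verts G S) 2" for S
    using that tw_le2[OF wf_del[OF wfG]] unfolding is_solution_def by blast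
  show ?thesis
  proof (cases "S' \<inter> (U \<union> {a1}) = {}")
    case False
    define S where "S = insert a1 (S' - U)"
    have "card S \<le> card S'"
    proof (cases "a1 \<in> S'")
      case True
      then have "S \<subseteq> S'" by (auto simp: S_def)
      then show ?thesis using finS by (rule card_mono[rotated])
    next
      case a1n: False
      then obtain u where u: "u \<in> S'" "u \<in> U" using False by blast
      have "S \<subseteq> insert a1 (S' - {u})" using u by (auto simp: S_def)
      then have "card S \<le> card (insert a1 (S' - {u}))" using finS by (intro card_mono) auto
      also have "\<dots> \<le> card S'" by (rule card_S'_le[OF finS u(1)])
      finally show ?thesis .
    qed
    moreover have "has_tw_le (del_verts G S) 2"
      by (rule conv_cut[OF hs S'V, of a1]) (use S'V2 a1V in \<open>auto simp: S_def\<close>)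
    moreover have "S \<subseteq> V" using S'V2 a1V by (auto simp: S_def)
    ultimately show ?thesis using mk cS by simp
  next
    case True
    show ?thesis
    proof (cases "a4 \<in> S'")
      case a4: True
      have "has_tw_le (del_verts G S') 2"
        by (rule conv_cut[OF hs S'V, of a4]) (use S'V2 a4 in auto)
      then show ?thesis using mk cS S'V2 by simp
    next
      case False
      have dis: "S' \<inter> (U \<union> {a1, a4}) = {}" using True False by auto
      show ?thesis
      proof (cases "reach (induced G (V - U - S')) a1 a4")
        case True
        then show ?thesis using case3b[OF hs S'V dis] by simp
      next
        case False
        then have "has_tw_le (del_verts G S') 2" by (rule case3a[OF hs S'V dis])
        then show ?thesis using mk cS S'V2 by simp
      qed
    qed
  qed
qed

lemma main: "(\<exists>S. is_solution G t S) \<longleftrightarrow> (\<exists>S. is_solution G' t S)"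
  using fwd conv by blast

end

theorem mainTheorem17:
  fixes G :: "'a graph" and t :: nat and X :: "'a set" and K :: "'a set"
    and a1 a2 a3 a4 :: 'a and B1 B2 B3 :: "'a graph"
  assumes "wf_graph G"
    and "\<not> trivial_instance G t"
    and "modulator G X"
    and "K \<in> components (del_verts G X)"
    and "bc_adj (induced G K) a1 B1" and "bc_adj (induced G K) a2 B1"
    and "bc_adj (induced G K) a2 B2" and "bc_adj (induced G K) a3 B2"
    and "bc_adj (induced G K) a3 B3" and "bc_adj (induced G K) a4 B3"
    and "distinct [a1, a2, a3, a4]" and "distinct [B1, B2, B3]"
    and "nbhd G ((verts B1 \<union> verts B2 \<union> verts B3) - {a1, a4}) = {a1, a4}"
  shows "(\<exists>S. is_solution G t S) \<longleftrightarrow> (\<exists>S. is_solution (contract_into G (verts B1) a1) t S)"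
proof -
  interpret L G t X K a1 a2 a3 a4 B1 B2 B3 using assms by unfold_locales
  show ?thesis by (rule main)
qed


end
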